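(* Let $K/k$ be a finite field extension and let $G$ be a finite group acting on $K(x_1,\ldots,x_n)$ by quasi-monomial $k$-automorphisms. Then there exists a normal subgroup $N$ of $G$ such that: (i) $K(x_1,\ldots,x_n)^N=K^N(y_1,\ldots,y_n)$, where $y_1,\ldots,y_n$ are algebraically independent over $K^N$ and each $y_i$ is of the form $a\,x_1^{e_1}x_2^{e_2}\cdots x_n^{e_n}$ with $a\in K^\times$ and $e_1,\ldots,e_n\in\mathbb{Z}$ (and one may take $a=1$ if the action of $G$ is purely quasi-monomial); (ii) $G/N$ acts on $K^N(y_1,\ldots,y_n)$ by quasi-monomial $k$-automorphisms; (iii) the homomorphism $\rho_{\underline{y}}\colon G/N\to GL_n(\mathbb{Z})$ associated to this action (with respect to $y_1,\ldots,y_n$) is injective.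
   Context: Let $K/k$ be a finite field extension and $K(x_1,\ldots,x_n)$ the rational function field over $K$. A finite subgroup $G\subset \mathrm{Aut}_k(K(x_1,\ldots,x_n))$ acts by quasi-monomial $k$-automorphisms if (i) $\sigma(K)\subset K$ for all $\sigma\in G$; (ii) $K^G=k$; (iii) for every $\sigma\in G$ and $1\le j\le n$, $\sigma(x_j)=c_j(\sigma)\prod_{i=1}^n x_i^{a_{ij}}$ with $c_j(\sigma)\in K^\times$ and $[a_{ij}]_{1\le i,j\le n}\in GL_n(\mathbb{Z})$. The action is purely quasi-monomial if moreover all $c_j(\sigma)=1$. The associated homomorphism $\rho_{\underline{x}}\colon G\to GL_n(\mathbb{Z})$ is $\rho_{\underline{x}}(\sigma)=[a_{ij}]$ where the $a_{ij}$ are as in (iii). *)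

theory Defs
  imports Main
begin

definition is_subfield :: "'L::field set \<Rightarrow> bool" where
  "is_subfield S \<longleftrightarrow> 0 \<in> S \<and> 1 \<in> S \<and>
     (\<forall>a\<in>S. \<forall>b\<in>S. a + b \<in> S \<and> a * b \<in> S \<and> a - b \<in> S) \<and>
     (\<forall>a\<in>S. inverse a \<in> S)"

definition field_gen :: "'L::field set \<Rightarrow> 'L set \<Rightarrow> 'L set" where
  "field_gen F S = \<Inter>{T. is_subfield T \<and> F \<subseteq> T \<and> S \<subseteq> T}"

definition finite_ext :: "'L::field set \<Rightarrow> 'L set \<Rightarrow> bool" where
  "finite_ext K k \<longleftrightarrow> is_subfield k \<and> is_subfield K \<and> k \<subseteq> K \<and>
     (\<exists>B. finite B \<and> B \<subseteq> K \<and>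
        (\<forall>a\<in>K. \<exists>c. (\<forall>b\<in>B. c b \<in> k) \<and> a = (\<Sum>b\<in>B. c b * b)))"

text \<open>Algebraic independence of y 0, ..., y (n-1) over F: every polynomial
  (finitely supported coefficient function on exponent vectors of length n)
  with coefficients in F vanishing at y is zero.\<close>
definition alg_indep :: "'L::field set \<Rightarrow> (nat \<Rightarrow> 'L) \<Rightarrow> nat \<Rightarrow> bool" where
  "alg_indep F y n \<longleftrightarrow>
     (\<forall>(c :: (nat \<Rightarrow> nat) \<Rightarrow> 'L) M. finite M \<and> (\<forall>m\<in>M. \<forall>i\<ge>n. m i = 0) \<and>
        (\<forall>m\<in>M. c m \<in> F) \<and> (\<Sum>m\<in>M. c m * (\<Prod>i<n. y i ^ m i)) = 0
        \<longrightarrow> (\<forall>m\<in>M. c m = 0))"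

definition field_aut :: "('L::field \<Rightarrow> 'L) \<Rightarrow> bool" where
  "field_aut \<sigma> \<longleftrightarrow> bij \<sigma> \<and> \<sigma> 1 = 1 \<and>
     (\<forall>a b. \<sigma> (a + b) = \<sigma> a + \<sigma> b \<and> \<sigma> (a * b) = \<sigma> a * \<sigma> b)"

definition aut_group :: "('L::field \<Rightarrow> 'L) set \<Rightarrow> bool" where
  "aut_group G \<longleftrightarrow> (\<forall>\<sigma>\<in>G. field_aut \<sigma>) \<and> id \<in> G \<and>
     (\<forall>\<sigma>\<in>G. \<forall>\<tau>\<in>G. \<sigma> \<circ> \<tau> \<in> G) \<and> (\<forall>\<sigma>\<in>G. inv \<sigma> \<in> G)"

definition normal_subgroup :: "('L::field \<Rightarrow> 'L) set \<Rightarrow> ('L \<Rightarrow> 'L) set \<Rightarrow> bool" where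
  "normal_subgroup N G \<longleftrightarrow> N \<subseteq> G \<and> aut_group N \<and>
     (\<forall>\<sigma>\<in>G. \<forall>\<tau>\<in>N. \<sigma> \<circ> \<tau> \<circ> inv \<sigma> \<in> N)"

definition fixed :: "'L set \<Rightarrow> ('L \<Rightarrow> 'L) set \<Rightarrow> 'L set" where
  "fixed S G = {a\<in>S. \<forall>\<sigma>\<in>G. \<sigma> a = a}"

definition gl_int :: "nat \<Rightarrow> (nat \<Rightarrow> nat \<Rightarrow> int) \<Rightarrow> bool" where
  "gl_int n A \<longleftrightarrow> (\<exists>B. \<forall>i<n. \<forall>j<n.
      (\<Sum>l<n. A i l * B l j) = (if i = j then 1 else 0) \<and>
      (\<Sum>l<n. B i l * A l j) = (if i = j then 1 else 0))"

definition lmon :: "(nat \<Rightarrow> 'L::field) \<Rightarrow> nat \<Rightarrow> (nat \<Rightarrow> nat \<Rightarrow> int) \<Rightarrow> nat \<Rightarrow> 'L" where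
  "lmon z n A j = (\<Prod>i<n. z i powi A i j)"

text \<open>sigma(z_j) = c_j(sigma) * prod_i z_i^(a_ij) with c_j(sigma) in F^* and
  A = [a_ij] in GL_n(Z); i.e. A is the matrix rho_z(sigma).\<close>
definition qm_matrix :: "('L::field \<Rightarrow> 'L) \<Rightarrow> 'L set \<Rightarrow> (nat \<Rightarrow> 'L) \<Rightarrow> nat
    \<Rightarrow> (nat \<Rightarrow> nat \<Rightarrow> int) \<Rightarrow> bool" where
  "qm_matrix \<sigma> F z n A \<longleftrightarrow> gl_int n A \<and>
     (\<forall>j<n. \<exists>c. c \<in> F \<and> c \<noteq> 0 \<and> \<sigma> (z j) = c * lmon z n A j)"

definition qm_action :: "('L::field \<Rightarrow> 'L) set \<Rightarrow> 'L set \<Rightarrow> 'L set \<Rightarrow> (nat \<Rightarrow> 'L) \<Rightarrow> nat \<Rightarrow> bool" where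
  "qm_action G k F z n \<longleftrightarrow> (\<forall>\<sigma>\<in>G. \<sigma> ` F \<subseteq> F) \<and> fixed F G = k \<and>
     (\<forall>\<sigma>\<in>G. \<exists>A. qm_matrix \<sigma> F z n A)"

definition purely_qm :: "('L::field \<Rightarrow> 'L) set \<Rightarrow> (nat \<Rightarrow> 'L) \<Rightarrow> nat \<Rightarrow> bool" where
  "purely_qm G z n \<longleftrightarrow> (\<forall>\<sigma>\<in>G. \<exists>A. gl_int n A \<and> (\<forall>j<n. \<sigma> (z j) = lmon z n A j))"

end

theory Submission
  imports Defs
begin

section \<open>Subfields\<close>

lemma sf_0: "is_subfield S \<Longrightarrow> 0 \<in> S" by (simp add: is_subfield_def)
lemma sf_1: "is_subfield S \<Longrightarrow> 1 \<in> S" by (simp add: is_subfield_def)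
lemma sf_add: "is_subfield S \<Longrightarrow> a \<in> S \<Longrightarrow> b \<in> S \<Longrightarrow> a + b \<in> S" by (simp add: is_subfield_def)
lemma sf_mult: "is_subfield S \<Longrightarrow> a \<in> S \<Longrightarrow> b \<in> S \<Longrightarrow> a * b \<in> S" by (simp add: is_subfield_def)
lemma sf_diff: "is_subfield S \<Longrightarrow> a \<in> S \<Longrightarrow> b \<in> S \<Longrightarrow> a - b \<in> S" by (simp add: is_subfield_def)
lemma sf_inverse: "is_subfield S \<Longrightarrow> a \<in> S \<Longrightarrow> inverse a \<in> S" by (simp add: is_subfield_def)
lemma sf_uminus: "is_subfield S \<Longrightarrow> a \<in> S \<Longrightarrow> - a \<in> S"
  using sf_diff[of S 0 a] sf_0[of S] by simp
lemma sf_divide: "is_subfield S \<Longrightarrow> a \<in> S \<Longrightarrow> b \<in> S \<Longrightarrow> a / b \<in> S"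
  by (simp add: divide_inverse sf_mult sf_inverse)
lemma sf_power: "is_subfield S \<Longrightarrow> a \<in> S \<Longrightarrow> a ^ k \<in> S"
  by (induction k) (auto intro: sf_1 sf_mult)
lemma sf_powi: "is_subfield S \<Longrightarrow> a \<in> S \<Longrightarrow> a powi k \<in> S"
  by (simp add: power_int_def sf_power sf_inverse)
lemma sf_sum: "is_subfield S \<Longrightarrow> (\<And>i. i \<in> A \<Longrightarrow> f i \<in> S) \<Longrightarrow> sum f A \<in> S"
  by (induction A rule: infinite_finite_induct) (auto intro: sf_0 sf_add)
lemma sf_prod: "is_subfield S \<Longrightarrow> (\<And>i. i \<in> A \<Longrightarrow> f i \<in> S) \<Longrightarrow> prod f A \<in> S"
  by (induction A rule: infinite_finite_induct) (auto intro: sf_1 sf_mult)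

lemma field_gen_sub: "is_subfield (field_gen F S)"
  unfolding is_subfield_def field_gen_def by auto
lemma field_gen_F: "F \<subseteq> field_gen F S" unfolding field_gen_def by auto
lemma field_gen_S: "S \<subseteq> field_gen F S" unfolding field_gen_def by auto
lemma field_gen_least: "is_subfield T \<Longrightarrow> F \<subseteq> T \<Longrightarrow> S \<subseteq> T \<Longrightarrow> field_gen F S \<subseteq> T"
  unfolding field_gen_def by auto

section \<open>Field automorphisms\<close>

lemma fa_add: "field_aut s \<Longrightarrow> s (a + b) = s a + s b" by (simp add: field_aut_def)
lemma fa_mult: "field_aut s \<Longrightarrow> s (a * b) = s a * s b" by (simp add: field_aut_def)
lemma fa_1: "field_aut s \<Longrightarrow> s 1 = 1" by (simp add: field_aut_def)
lemma fa_bij: "field_aut s \<Longrightarrow> bij s" by (simp add: field_aut_def)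
lemma fa_inj: "field_aut s \<Longrightarrow> inj s" by (simp add: field_aut_def bij_is_inj)
lemma fa_0: "field_aut s \<Longrightarrow> s 0 = 0"
proof -
  assume f: "field_aut s"
  have "s 0 + s 0 = s 0 + 0" using fa_add[OF f, of 0 0] by simp
  thus ?thesis by (rule add_left_imp_eq)
qed
lemma fa_uminus: "field_aut s \<Longrightarrow> s (- a) = - s a"
  using fa_add[of s a "-a"] fa_0[of s] by (metis minus_unique add.right_inverse)
lemma fa_diff: "field_aut s \<Longrightarrow> s (a - b) = s a - s b"
  using fa_add[of s a "-b"] fa_uminus[of s b] by simp
lemma fa_nz: "field_aut s \<Longrightarrow> a \<noteq> 0 \<Longrightarrow> s a \<noteq> 0"
  using fa_inj[of s] fa_0[of s] by (metis injD)
lemma fa_eq0: "field_aut s \<Longrightarrow> (s a = 0) = (a = 0)"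
  using fa_nz fa_0 by metis
lemma fa_inverse: assumes f: "field_aut s" shows "s (inverse a) = inverse (s a)"
proof (cases "a = 0")
  case True then show ?thesis using fa_0[OF f] by simp
next
  case False
  have "s a * s (inverse a) = 1" using fa_mult[OF f, of a "inverse a"] fa_1[OF f] False by simp
  then show ?thesis using fa_nz[OF f False] by (metis inverse_unique)
qed
lemma fa_divide: "field_aut s \<Longrightarrow> s (a / b) = s a / s b"
  by (simp add: divide_inverse fa_mult fa_inverse)
lemma fa_power: "field_aut s \<Longrightarrow> s (a ^ k) = s a ^ k"
  by (induction k) (auto simp: fa_1 fa_mult)
lemma fa_powi: "field_aut s \<Longrightarrow> s (a powi k) = s a powi k"
  by (simp add: power_int_def fa_power fa_inverse)
lemma fa_prod: "field_aut s \<Longrightarrow> s (prod f A) = (\<Prod>i\<in>A. s (f i))"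
  by (induction A rule: infinite_finite_induct) (auto simp: fa_1 fa_mult)
lemma fa_sum: "field_aut s \<Longrightarrow> s (sum f A) = (\<Sum>i\<in>A. s (f i))"
  by (induction A rule: infinite_finite_induct) (auto simp: fa_0 fa_add)

section \<open>Laurent monomials\<close>

definition Xm :: "(nat \<Rightarrow> 'L::field) \<Rightarrow> nat \<Rightarrow> (nat \<Rightarrow> int) \<Rightarrow> 'L" where
  "Xm z n u = (\<Prod>i<n. z i powi u i)"

lemma prod_powi: "(\<Prod>i\<in>A. f i) powi k = (\<Prod>i\<in>A. (f i :: 'a::field) powi k)"
  by (induction A rule: infinite_finite_induct) (auto simp: power_int_mult_distrib)

context
  fixes z :: "nat \<Rightarrow> 'L::field" and n :: nat
  assumes znz: "\<forall>i<n. z i \<noteq> 0"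
begin

lemma Xm_nz: "Xm z n u \<noteq> 0"
  unfolding Xm_def using znz by (simp add: prod_zero_iff)

lemma Xm_add: "Xm z n (\<lambda>i. u i + v i) = Xm z n u * Xm z n v"
  unfolding Xm_def using znz by (simp add: power_int_add prod.distrib)

lemma Xm_zero: "Xm z n (\<lambda>i. 0) = 1"
  unfolding Xm_def by simp

lemma Xm_powi: "Xm z n u powi k = Xm z n (\<lambda>i. k * u i)"
  unfolding Xm_def by (simp add: prod_powi power_int_mult[symmetric] mult.commute)

lemma Xm_sum: "finite J \<Longrightarrow> Xm z n (\<lambda>i. \<Sum>j\<in>J. f j i) = (\<Prod>j\<in>J. Xm z n (f j))"
proof (induction J rule: finite_induct)
  case empty then show ?case by (simp add: Xm_zero)
next
  case (insert a J)
  have "Xm z n (\<lambda>i. \<Sum>j\<in>insert a J. f j i) = Xm z n (\<lambda>i. f a i + (\<Sum>j\<in>J. f j i))"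
    using insert by simp
  also have "\<dots> = Xm z n (f a) * Xm z n (\<lambda>i. \<Sum>j\<in>J. f j i)" by (rule Xm_add)
  finally show ?case using insert by simp
qed

lemma Xm_lin: "finite J \<Longrightarrow> (\<Prod>j\<in>J. Xm z n (w j) powi u j) = Xm z n (\<lambda>i. \<Sum>j\<in>J. u j * w j i)"
  by (simp add: Xm_sum Xm_powi)

lemma Xm_cong: "(\<And>i. i < n \<Longrightarrow> u i = v i) \<Longrightarrow> Xm z n u = Xm z n v"
  unfolding Xm_def by (rule prod.cong) auto

lemma Xm_delta: "j < n \<Longrightarrow> Xm z n (\<lambda>i. if i = j then 1 else 0) = z j"
proof -
  assume j: "j < n"
  have "Xm z n (\<lambda>i. if i = j then 1 else 0) = (\<Prod>i<n. if i = j then z i else 1)"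
    unfolding Xm_def by (rule prod.cong) auto
  also have "\<dots> = z j" using j by (simp add: prod.delta)
  finally show ?thesis .
qed

lemma Xm_aut:
  assumes f: "field_aut s" and e: "\<forall>j<n. s (z j) = e j * Xm z n (\<lambda>i. M i j)"
  shows "s (Xm z n u) = (\<Prod>j<n. e j powi u j) * Xm z n (\<lambda>i. \<Sum>j<n. u j * M i j)"
proof -
  have "s (Xm z n u) = (\<Prod>j<n. s (z j) powi u j)"
    unfolding Xm_def by (simp add: fa_prod[OF f] fa_powi[OF f])
  also have "\<dots> = (\<Prod>j<n. e j powi u j * Xm z n (\<lambda>i. M i j) powi u j)"
    by (rule prod.cong) (auto simp: e power_int_mult_distrib)
  also have "\<dots> = (\<Prod>j<n. e j powi u j) * (\<Prod>j<n. Xm z n (\<lambda>i. M i j) powi u j)"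
    by (simp add: prod.distrib)
  also have "(\<Prod>j<n. Xm z n (\<lambda>i. M i j) powi u j) = Xm z n (\<lambda>i. \<Sum>j<n. u j * M i j)"
    by (rule Xm_lin) simp
  finally show ?thesis .
qed

end


locale qmsetup =
  fixes K k :: "'L::field set" and x :: "nat \<Rightarrow> 'L" and n :: nat
    and G :: "('L \<Rightarrow> 'L) set"
  assumes Kf: "is_subfield K"
    and xalg: "alg_indep K x n"
    and gen: "field_gen K (x ` {..<n}) = UNIV"
    and finG: "finite G" and autG: "aut_group G"
    and qmG: "qm_action G k K x n"
begin

definition mono :: "(nat \<Rightarrow> nat) \<Rightarrow> 'L" where
  "mono m = (\<Prod>i<n. x i ^ m i)"

lemma x_nz: "i < n \<Longrightarrow> x i \<noteq> 0"
proof
  assume i: "i < n" and x0: "x i = 0"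
  define m :: "nat \<Rightarrow> nat" where "m = (\<lambda>j. if j = i then 1 else 0)"
  have "(\<Prod>j<n. x j ^ m j) = (\<Prod>j<n. if j = i then x j else 1)"
    by (rule prod.cong) (auto simp: m_def)
  also have "\<dots> = 0" using i x0 by (simp add: prod.delta)
  finally have p: "(\<Prod>j<n. x j ^ m j) = 0" .
  have "\<forall>m'\<in>{m}. (\<lambda>_. 1::'L) m' = 0"
    using xalg unfolding alg_indep_def
    apply (elim allE[of _ "\<lambda>_. 1"] allE[of _ "{m}"])
    using i p sf_1[OF Kf] by (auto simp: m_def)
  then show False by simp
qed

lemma xnz: "\<forall>i<n. x i \<noteq> 0" using x_nz by blast

lemma G_aut: "s \<in> G \<Longrightarrow> field_aut s" using autG by (simp add: aut_group_def)
lemma G_inv: "s \<in> G \<Longrightarrow> inv s \<in> G" using autG by (simp add: aut_group_def)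
lemma G_comp: "s \<in> G \<Longrightarrow> t \<in> G \<Longrightarrow> s \<circ> t \<in> G" using autG by (simp add: aut_group_def)
lemma G_id: "id \<in> G" using autG by (simp add: aut_group_def)
lemma G_K: "s \<in> G \<Longrightarrow> a \<in> K \<Longrightarrow> s a \<in> K" using qmG by (auto simp: qm_action_def)
lemma G_fixK: "fixed K G = k" using qmG by (auto simp: qm_action_def)
lemma G_inv_inv: "s \<in> G \<Longrightarrow> inv (inv s) = s"
  using G_aut fa_bij inv_inv_eq by blast
lemma G_inv_r: "s \<in> G \<Longrightarrow> s (inv s a) = a"
  using G_aut fa_bij bij_is_surj surj_f_inv_f by metis
lemma G_inv_l: "s \<in> G \<Longrightarrow> inv s (s a) = a"
  using G_aut fa_bij bij_is_inj inv_f_f by metis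

lemma lmon_Xm: "lmon z n A j = Xm z n (\<lambda>i. A i j)"
  by (simp add: lmon_def Xm_def)

lemma G_mat: "s \<in> G \<Longrightarrow> \<exists>M e. gl_int n M \<and> (\<forall>j<n. e j \<in> K \<and> e j \<noteq> 0 \<and> s (x j) = e j * Xm x n (\<lambda>i. M i j))"
proof -
  assume s: "s \<in> G"
  then obtain M where M: "qm_matrix s K x n M" using qmG by (auto simp: qm_action_def)
  then have "\<forall>j<n. \<exists>c. c \<in> K \<and> c \<noteq> 0 \<and> s (x j) = c * Xm x n (\<lambda>i. M i j)"
    by (simp add: qm_matrix_def lmon_Xm)
  then obtain e where "\<forall>j<n. e j \<in> K \<and> e j \<noteq> 0 \<and> s (x j) = e j * Xm x n (\<lambda>i. M i j)"
    by metis
  then show ?thesis using M by (auto simp: qm_matrix_def)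
qed

lemma mono_Xm: "mono m = Xm x n (\<lambda>i. int (m i))"
  unfolding mono_def Xm_def by (simp add: power_int_of_nat)

lemma LI:
  assumes M: "finite M" and dK: "\<forall>m\<in>M. d m \<in> K"
    and inj: "\<forall>m\<in>M. \<forall>m'\<in>M. (\<forall>j<n. \<phi> m j = \<phi> m' j) \<longrightarrow> m = m'"
    and sum0: "(\<Sum>m\<in>M. d m * Xm x n (\<phi> m)) = 0"
  shows "\<forall>m\<in>M. d m = 0"
proof -
  define S :: int where "S = (\<Sum>m\<in>M. \<Sum>j<n. \<bar>\<phi> m j\<bar>)"
  have bnd: "\<bar>\<phi> m j\<bar> \<le> S" if "m \<in> M" "j < n" for m j
  proof -
    have "\<bar>\<phi> m j\<bar> \<le> (\<Sum>j<n. \<bar>\<phi> m j\<bar>)" using that by (intro member_le_sum) auto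
    also have "\<dots> \<le> S" unfolding S_def using that M by (intro member_le_sum) (auto intro: sum_nonneg)
    finally show ?thesis .
  qed
  define \<psi> where "\<psi> m = (\<lambda>j. if j < n then nat (\<phi> m j + S) else 0)" for m
  have key: "Xm x n (\<phi> m) * Xm x n (\<lambda>j. S) = mono (\<psi> m)" if "m \<in> M" for m
  proof -
    have pos: "0 \<le> \<phi> m i + S" if "i < n" for i
    proof -
      have "\<bar>\<phi> m i\<bar> \<le> S" by (rule bnd[OF \<open>m \<in> M\<close> that])
      then show ?thesis by linarith
    qed
    have "Xm x n (\<phi> m) * Xm x n (\<lambda>j. S) = Xm x n (\<lambda>j. \<phi> m j + S)"
      using Xm_add[OF xnz] by simp
    also have "\<dots> = Xm x n (\<lambda>i. int (\<psi> m i))"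
      by (rule Xm_cong[OF xnz]) (use pos in \<open>auto simp: \<psi>_def\<close>)
    finally show ?thesis by (simp add: mono_Xm)
  qed
  have s2: "(\<Sum>m\<in>M. d m * mono (\<psi> m)) = 0"
  proof -
    have "(\<Sum>m\<in>M. d m * mono (\<psi> m)) = (\<Sum>m\<in>M. d m * Xm x n (\<phi> m)) * Xm x n (\<lambda>j. S)"
      by (simp add: sum_distrib_right key mult.assoc)
    then show ?thesis using sum0 by simp
  qed
  have injpsi: "inj_on \<psi> M"
  proof (rule inj_onI)
    fix m m' assume m: "m \<in> M" "m' \<in> M" "\<psi> m = \<psi> m'"
    have "\<forall>j<n. \<phi> m j = \<phi> m' j"
    proof (intro allI impI)
      fix j assume j: "j < n"
      have "nat (\<phi> m j + S) = nat (\<phi> m' j + S)" using m(3) j unfolding \<psi>_def by (metis (full_types))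
      then show "\<phi> m j = \<phi> m' j" using bnd[OF m(1) j] bnd[OF m(2) j] by simp
    qed
    then show "m = m'" using inj m by blast
  qed
  define c where "c u = d (the_inv_into M \<psi> u)" for u
  have "\<forall>u\<in>\<psi> ` M. c u = 0"
    using xalg unfolding alg_indep_def
  proof (elim allE[of _ c] allE[of _ "\<psi> ` M"], elim impE)
    have "(\<Sum>u\<in>\<psi> ` M. c u * (\<Prod>i<n. x i ^ u i)) = (\<Sum>m\<in>M. c (\<psi> m) * mono (\<psi> m))"
      by (simp add: sum.reindex[OF injpsi] mono_def)
    also have "\<dots> = (\<Sum>m\<in>M. d m * mono (\<psi> m))"
      by (rule sum.cong) (auto simp: c_def the_inv_into_f_f[OF injpsi])
    moreover have "\<forall>u\<in>\<psi> ` M. c u \<in> K" using dK by (auto simp: c_def the_inv_into_f_f[OF injpsi])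
    moreover have "\<forall>u\<in>\<psi> ` M. \<forall>i\<ge>n. u i = 0" by (auto simp: \<psi>_def)
    ultimately show "finite (\<psi> ` M) \<and> (\<forall>m\<in>\<psi> ` M. \<forall>i\<ge>n. m i = 0) \<and> (\<forall>m\<in>\<psi> ` M. c m \<in> K) \<and>
        (\<Sum>m\<in>\<psi> ` M. c m * (\<Prod>i<n. x i ^ m i)) = 0"
      using M s2 by auto
  qed
  then show ?thesis by (auto simp: c_def the_inv_into_f_f[OF injpsi])
qed

lemma uniq:
  assumes "c \<in> K" "c \<noteq> 0" "c' \<in> K" "c * Xm x n u = c' * Xm x n v"
  shows "\<forall>j<n. u j = v j"
proof (rule ccontr)
  assume nq: "\<not> (\<forall>j<n. u j = v j)"
  define d where "d b = (if b then c else - c')" for b :: bool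
  define \<phi> where "\<phi> b = (if b then u else v)" for b :: bool
  have "\<forall>b\<in>(UNIV::bool set). d b = 0"
  proof (rule LI)
    show "\<forall>m\<in>UNIV. d m \<in> K" using assms sf_uminus[OF Kf] by (auto simp: d_def)
    show "\<forall>m\<in>UNIV. \<forall>m'\<in>UNIV. (\<forall>j<n. \<phi> m j = \<phi> m' j) \<longrightarrow> m = m'"
      using nq by (auto simp: \<phi>_def)
    show "(\<Sum>m\<in>UNIV. d m * Xm x n (\<phi> m)) = 0"
      using assms(4) by (simp add: UNIV_bool d_def \<phi>_def)
  qed simp
  then have "d True = 0" by simp
  then show False using assms(2) by (simp add: d_def)
qed

end


context qmsetup begin

definition N where "N = {s\<in>G. \<forall>j<n. \<exists>c\<in>K. s (x j) = c * x j}"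

lemma N_G: "N \<subseteq> G" by (auto simp: N_def)
lemma N_aut: "t \<in> N \<Longrightarrow> field_aut t" using N_G G_aut by blast
lemma finN: "finite N" using N_G finG finite_subset by blast

lemma Nx: "t \<in> N \<Longrightarrow> \<exists>e. \<forall>j<n. e j \<in> K \<and> e j \<noteq> 0 \<and> t (x j) = e j * x j"
proof -
  assume t: "t \<in> N"
  then have "\<forall>j<n. \<exists>c. c \<in> K \<and> t (x j) = c * x j" by (auto simp: N_def)
  then obtain e where e: "\<forall>j<n. e j \<in> K \<and> t (x j) = e j * x j" by metis
  have "\<forall>j<n. e j \<noteq> 0"
  proof (intro allI impI notI)
    fix j assume "j < n" "e j = 0"
    then have "t (x j) = 0" using e by simp
    then show False using fa_eq0[OF N_aut[OF t]] x_nz \<open>j < n\<close> by simp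
  qed
  then show ?thesis using e by blast
qed

lemma delta_sum: "i < n \<Longrightarrow> (\<Sum>j<n. u j * (if i = j then 1 else 0)) = (u i :: int)"
proof -
  assume i: "i < n"
  have "(\<Sum>j<n. u j * (if i = j then 1 else 0)) = (\<Sum>j<n. if j = i then u j else 0)"
    by (rule sum.cong) auto
  then show ?thesis using i by simp
qed

lemma N_Xm: "t \<in> N \<Longrightarrow> \<exists>c. c \<in> K \<and> c \<noteq> 0 \<and> t (Xm x n u) = c * Xm x n u"
proof -
  assume t: "t \<in> N"
  obtain e where e: "\<forall>j<n. e j \<in> K \<and> e j \<noteq> 0 \<and> t (x j) = e j * x j" using Nx[OF t] by blast
  have e2: "\<forall>j<n. t (x j) = e j * Xm x n (\<lambda>i. if i = j then 1 else 0)"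
    using e Xm_delta[OF xnz] by simp
  have "t (Xm x n u) = (\<Prod>j<n. e j powi u j) * Xm x n (\<lambda>i. \<Sum>j<n. u j * (if i = j then 1 else 0))"
    by (rule Xm_aut[OF xnz N_aut[OF t] e2])
  also have "Xm x n (\<lambda>i. \<Sum>j<n. u j * (if i = j then 1 else 0)) = Xm x n u"
    by (rule Xm_cong[OF xnz]) (simp add: delta_sum)
  finally have "t (Xm x n u) = (\<Prod>j<n. e j powi u j) * Xm x n u" .
  moreover have "(\<Prod>j<n. e j powi u j) \<in> K" using e by (auto intro!: sf_prod[OF Kf] sf_powi[OF Kf])
  moreover have "(\<Prod>j<n. e j powi u j) \<noteq> 0" using e by (simp add: prod_zero_iff)
  ultimately show ?thesis by blast
qed

lemma N_scale: "t \<in> N \<Longrightarrow> c \<in> K \<Longrightarrow> \<exists>d\<in>K. t (c * Xm x n u) = d * (c * Xm x n u)"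
proof -
  assume t: "t \<in> N" and c: "c \<in> K"
  obtain d where d: "d \<in> K" "t (Xm x n u) = d * Xm x n u" using N_Xm[OF t] by blast
  have tc: "t c \<in> K" using G_K t N_G c by blast
  show ?thesis
  proof (cases "c = 0")
    case True then show ?thesis using sf_0[OF Kf] fa_0[OF N_aut[OF t]] by auto
  next
    case False
    have "t (c * Xm x n u) = (t c * d / c) * (c * Xm x n u)"
      using False d by (simp add: fa_mult[OF N_aut[OF t]])
    moreover have "t c * d / c \<in> K" using tc d c by (intro sf_divide[OF Kf] sf_mult[OF Kf])
    ultimately show ?thesis by blast
  qed
qed

lemma id_N: "id \<in> N"
  using G_id sf_1[OF Kf] by (auto simp: N_def)

lemma N_normal: "normal_subgroup N G"
proof -
  have comp: "s \<circ> t \<in> N" if s: "s \<in> N" and t: "t \<in> N" for s t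
  proof -
    have H: "\<exists>c\<in>K. (s \<circ> t) (x j) = c * x j" if j: "j < n" for j
    proof -
      obtain a where a: "a \<in> K" "t (x j) = a * x j" using t j by (auto simp: N_def)
      obtain b where b: "b \<in> K" "s (x j) = b * x j" using s j by (auto simp: N_def)
      have "(s \<circ> t) (x j) = (s a * b) * x j" using a b fa_mult[OF N_aut[OF s]] by simp
      moreover have "s a * b \<in> K" using G_K N_G s a b by (auto intro: sf_mult[OF Kf])
      ultimately show ?thesis by blast
    qed
    have "s \<circ> t \<in> G" using G_comp N_G s t by blast
    then show ?thesis unfolding N_def using H by blast
  qed
  have invN: "inv s \<in> N" if s: "s \<in> N" for s
  proof -
    have sG: "s \<in> G" using s N_G by blast
    obtain e where e: "\<forall>j<n. e j \<in> K \<and> e j \<noteq> 0 \<and> s (x j) = e j * x j" using Nx[OF s] by blast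
    have H: "\<exists>c\<in>K. inv s (x j) = c * x j" if j: "j < n" for j
    proof -
      have f: "field_aut (inv s)" using G_aut G_inv sG by blast
      have "x j = inv s (s (x j))" using G_inv_l[OF sG] by simp
      also have "\<dots> = inv s (e j) * inv s (x j)" using e j fa_mult[OF f] by simp
      finally have eq: "x j = inv s (e j) * inv s (x j)" .
      have nz: "inv s (e j) \<noteq> 0" using fa_nz[OF f] e j by blast
      have "inv s (x j) = inverse (inv s (e j)) * x j" using eq nz by (simp add: field_simps)
      moreover have "inverse (inv s (e j)) \<in> K" using G_K G_inv sG e j by (auto intro: sf_inverse[OF Kf])
      ultimately show ?thesis by blast
    qed
    show ?thesis unfolding N_def using G_inv[OF sG] H by blast
  qed
  have norm: "s \<circ> t \<circ> inv s \<in> N" if s: "s \<in> G" and t: "t \<in> N" for s t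
  proof -
    have H: "\<exists>c\<in>K. (s \<circ> t \<circ> inv s) (x j) = c * x j" if j: "j < n" for j
    proof -
      obtain M e where Me: "\<forall>j<n. e j \<in> K \<and> e j \<noteq> 0 \<and> inv s (x j) = e j * Xm x n (\<lambda>i. M i j)"
        using G_mat[OF G_inv[OF s]] by blast
      obtain d where d: "d \<in> K" "t (e j * Xm x n (\<lambda>i. M i j)) = d * (e j * Xm x n (\<lambda>i. M i j))"
        using N_scale[OF t, of "e j"] Me j by blast
      have "(s \<circ> t \<circ> inv s) (x j) = s (d * inv s (x j))" using Me j d by simp
      also have "\<dots> = s d * x j" using fa_mult[OF G_aut[OF s]] G_inv_r[OF s] by simp
      finally show ?thesis using G_K[OF s d(1)] by blast
    qed
    have "s \<circ> t \<circ> inv s \<in> G" using G_comp G_inv N_G s t by blast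
    then show ?thesis unfolding N_def using H by blast
  qed
  show ?thesis unfolding normal_subgroup_def aut_group_def
    using N_G N_aut id_N comp invN norm by simp
qed

lemma N_conj: "s \<in> G \<Longrightarrow> t \<in> N \<Longrightarrow> inv s \<circ> t \<circ> s \<in> N"
  using N_normal G_inv G_inv_inv unfolding normal_subgroup_def by metis

lemma N_pres: "s \<in> G \<Longrightarrow> a \<in> fixed UNIV N \<Longrightarrow> s a \<in> fixed UNIV N"
proof -
  assume s: "s \<in> G" and a: "a \<in> fixed UNIV N"
  have "t (s a) = s a" if t: "t \<in> N" for t
  proof -
    have "(inv s \<circ> t \<circ> s) a = a" using N_conj[OF s t] a by (auto simp: fixed_def)
    then have "s ((inv s \<circ> t \<circ> s) a) = s a" by simp
    then show ?thesis using G_inv_r[OF s] by simp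
  qed
  then show ?thesis by (simp add: fixed_def)
qed

lemma N_presK: "s \<in> G \<Longrightarrow> a \<in> fixed K N \<Longrightarrow> s a \<in> fixed K N"
  using N_pres[of s a] G_K[of s a] by (auto simp: fixed_def)

lemma fixedI: "a \<in> S \<Longrightarrow> (\<And>t. t \<in> N \<Longrightarrow> t a = a) \<Longrightarrow> a \<in> fixed S N"
  by (simp add: fixed_def)
lemma fixedD: "a \<in> fixed S N \<Longrightarrow> t \<in> N \<Longrightarrow> t a = a"
  by (simp add: fixed_def)
lemma fixedS: "a \<in> fixed S N \<Longrightarrow> a \<in> S"
  by (simp add: fixed_def)

lemma fixed_subS: assumes S: "is_subfield S" shows "is_subfield (fixed S N)"
  unfolding is_subfield_def
proof (intro conjI ballI)
  show "0 \<in> fixed S N" by (rule fixedI) (simp_all add: sf_0[OF S] fa_0[OF N_aut])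
  show "1 \<in> fixed S N" by (rule fixedI) (simp_all add: sf_1[OF S] fa_1[OF N_aut])
  fix a b assume a: "a \<in> fixed S N" and b: "b \<in> fixed S N"
  show "a + b \<in> fixed S N" by (rule fixedI)
     (simp_all add: sf_add[OF S fixedS[OF a] fixedS[OF b]] fa_add[OF N_aut] fixedD[OF a] fixedD[OF b])
  show "a * b \<in> fixed S N" by (rule fixedI)
     (simp_all add: sf_mult[OF S fixedS[OF a] fixedS[OF b]] fa_mult[OF N_aut] fixedD[OF a] fixedD[OF b])
  show "a - b \<in> fixed S N" by (rule fixedI)
     (simp_all add: sf_diff[OF S fixedS[OF a] fixedS[OF b]] fa_diff[OF N_aut] fixedD[OF a] fixedD[OF b])
next
  fix a assume a: "a \<in> fixed S N"
  show "inverse a \<in> fixed S N" by (rule fixedI)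
     (simp_all add: sf_inverse[OF S fixedS[OF a]] fa_inverse[OF N_aut] fixedD[OF a])
qed

lemma UNIV_sub: "is_subfield (UNIV :: 'L set)" by (simp add: is_subfield_def)

lemma fixed_sub: "is_subfield (fixed UNIV N)" by (rule fixed_subS[OF UNIV_sub])
lemma fixedK_sub: "is_subfield (fixed K N)" by (rule fixed_subS[OF Kf])

lemma cardN: "card N > 0" using id_N finN card_gt_0_iff by blast

end


context qmsetup begin

inductive_set PP where
  cK: "c \<in> K \<Longrightarrow> c \<in> PP"
| cx: "i < n \<Longrightarrow> x i \<in> PP"
| cadd: "p \<in> PP \<Longrightarrow> q \<in> PP \<Longrightarrow> p + q \<in> PP"
| cmul: "p \<in> PP \<Longrightarrow> q \<in> PP \<Longrightarrow> p * q \<in> PP"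
| cneg: "p \<in> PP \<Longrightarrow> - p \<in> PP"

lemma PP_1: "1 \<in> PP" using cK sf_1[OF Kf] by blast

lemma PP_prod: "(\<And>i. i \<in> A \<Longrightarrow> f i \<in> PP) \<Longrightarrow> prod f A \<in> PP"
  by (induction A rule: infinite_finite_induct) (auto intro: PP_1 cmul)

lemma R_all: "\<exists>p q. p \<in> PP \<and> q \<in> PP \<and> q \<noteq> 0 \<and> f = p / q"
proof -
  define R where "R = {p / q | p q. p \<in> PP \<and> q \<in> PP \<and> q \<noteq> 0}"
  have Rsub: "is_subfield R"
    unfolding is_subfield_def
  proof (intro conjI ballI)
    show "0 \<in> R" unfolding R_def using cK[OF sf_0[OF Kf]] PP_1 by force
    show "1 \<in> R" unfolding R_def using PP_1 by force
    fix a b assume a: "a \<in> R" and b: "b \<in> R"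
    obtain p q where pq: "p \<in> PP" "q \<in> PP" "q \<noteq> 0" "a = p / q" using a R_def by blast
    obtain p' q' where pq': "p' \<in> PP" "q' \<in> PP" "q' \<noteq> 0" "b = p' / q'" using b R_def by blast
    have "a + b = (p * q' + p' * q) / (q * q')" using pq pq' by (simp add: field_simps)
    moreover have "p * q' + p' * q \<in> PP" "q * q' \<in> PP" using pq pq' by (auto intro: cadd cmul)
    ultimately show "a + b \<in> R" unfolding R_def using pq pq' by force
    have "a * b = (p * p') / (q * q')" using pq pq' by simp
    moreover have "p * p' \<in> PP" "q * q' \<in> PP" using pq pq' by (auto intro: cmul)
    ultimately show "a * b \<in> R" unfolding R_def using pq pq' by force
    have "a - b = (p * q' + - (p' * q)) / (q * q')" using pq pq' by (simp add: diff_frac_eq)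
    moreover have "p * q' + - (p' * q) \<in> PP" "q * q' \<in> PP" using pq pq' by (blast intro: cadd cmul cneg)+
    ultimately show "a - b \<in> R" unfolding R_def using pq pq' by force
  next
    fix a assume a: "a \<in> R"
    obtain p q where pq: "p \<in> PP" "q \<in> PP" "q \<noteq> 0" "a = p / q" using a R_def by blast
    show "inverse a \<in> R"
    proof (cases "p = 0")
      case True
      then have "inverse a = 0 / 1" using pq by simp
      then show ?thesis unfolding R_def using cK[OF sf_0[OF Kf]] PP_1 by force
    next
      case False
      then have "inverse a = q / p" using pq by simp
      then show ?thesis unfolding R_def using pq False by force
    qed
  qed
  have "K \<subseteq> R"
  proof
    fix c assume "c \<in> K"
    then have "c = c / 1" "c \<in> PP" using cK by auto
    then show "c \<in> R" unfolding R_def using PP_1 by force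
  qed
  moreover have "x ` {..<n} \<subseteq> R"
  proof
    fix y assume "y \<in> x ` {..<n}"
    then obtain i where "i < n" "y = x i" by auto
    then have "y = x i / 1" "x i \<in> PP" using cx by auto
    then show "y \<in> R" unfolding R_def using PP_1 by force
  qed
  ultimately have "field_gen K (x ` {..<n}) \<subseteq> R" by (rule field_gen_least[OF Rsub])
  then have "f \<in> R" using gen by auto
  then show ?thesis unfolding R_def by blast
qed

definition isNF :: "'L \<Rightarrow> ((nat \<Rightarrow> nat) set) \<Rightarrow> ((nat \<Rightarrow> nat) \<Rightarrow> 'L) \<Rightarrow> bool" where
  "isNF p M c \<longleftrightarrow> finite M \<and> (\<forall>m\<in>M. \<forall>i\<ge>n. m i = 0) \<and> (\<forall>m\<in>M. c m \<in> K) \<and>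
     p = (\<Sum>m\<in>M. c m * mono m)"

lemma mono_add: "mono (\<lambda>i. m i + m' i) = mono m * mono m'"
  unfolding mono_def by (simp add: power_add prod.distrib)

lemma mono_0: "mono (\<lambda>i. 0) = 1" unfolding mono_def by simp

lemma NF: "p \<in> PP \<Longrightarrow> \<exists>M c. isNF p M c"
proof (induction p rule: PP.induct)
  case (cK c)
  have "isNF c {\<lambda>i. 0} (\<lambda>_. c)" using cK by (simp add: isNF_def mono_0)
  then show ?case by blast
next
  case (cx i)
  define m :: "nat \<Rightarrow> nat" where "m = (\<lambda>j. if j = i then 1 else 0)"
  have "mono m = (\<Prod>j<n. if j = i then x j else 1)"
    unfolding mono_def by (rule prod.cong) (auto simp: m_def)
  also have "\<dots> = x i" using cx by (simp add: prod.delta)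
  finally have "isNF (x i) {m} (\<lambda>_. 1)" using cx sf_1[OF Kf] by (auto simp: isNF_def m_def)
  then show ?case by blast
next
  case (cadd p q)
  obtain M c where M: "isNF p M c" using cadd by blast
  obtain M' c' where M': "isNF q M' c'" using cadd by blast
  define d where "d m = (if m \<in> M then c m else 0) + (if m \<in> M' then c' m else 0)" for m
  have fin: "finite (M \<union> M')" using M M' by (simp add: isNF_def)
  have e1: "(\<Sum>m\<in>M. c m * mono m) = (\<Sum>m\<in>M \<union> M'. (if m \<in> M then c m else 0) * mono m)"
    by (rule sum.mono_neutral_cong_left[OF fin]) auto
  have e2: "(\<Sum>m\<in>M'. c' m * mono m) = (\<Sum>m\<in>M \<union> M'. (if m \<in> M' then c' m else 0) * mono m)"
    by (rule sum.mono_neutral_cong_left[OF fin]) auto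
  have "p + q = (\<Sum>m\<in>M \<union> M'. d m * mono m)"
    using M M' e1 e2 by (simp add: isNF_def d_def distrib_right sum.distrib)
  moreover have "\<forall>m\<in>M \<union> M'. d m \<in> K" using M M'
    by (auto simp: isNF_def d_def intro: sf_add[OF Kf] sf_0[OF Kf])
  ultimately have "isNF (p + q) (M \<union> M') d" using M M' fin by (auto simp: isNF_def)
  then show ?case by blast
next
  case (cneg p)
  obtain M c where M: "isNF p M c" using cneg by blast
  have "- p = (\<Sum>m\<in>M. (- c m) * mono m)" using M by (simp add: isNF_def sum_negf)
  then have "isNF (- p) M (\<lambda>m. - c m)" using M sf_uminus[OF Kf] by (auto simp: isNF_def)
  then show ?case by blast
next
  case (cmul p q)
  obtain M c where M: "isNF p M c" using cmul by blast
  obtain M' c' where M': "isNF q M' c'" using cmul by blast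
  define g where "g = (\<lambda>(m::nat\<Rightarrow>nat, m'::nat\<Rightarrow>nat). (\<lambda>i. m i + m' i))"
  define S where "S = M \<times> M'"
  define T where "T = g ` S"
  define d where "d y = (\<Sum>z\<in>{z \<in> S. g z = y}. c (fst z) * c' (snd z))" for y
  have finS: "finite S" using M M' by (simp add: isNF_def S_def)
  have finT: "finite T" using finS by (simp add: T_def)
  have "p * q = (\<Sum>m\<in>M. \<Sum>m'\<in>M'. (c m * mono m) * (c' m' * mono m'))"
    using M M' by (simp add: isNF_def sum_product)
  also have "\<dots> = (\<Sum>z\<in>S. c (fst z) * c' (snd z) * mono (g z))"
    by (simp add: S_def sum.cartesian_product g_def mono_add case_prod_beta mult_ac)
  also have "\<dots> = (\<Sum>y\<in>T. \<Sum>z\<in>{z \<in> S. g z = y}. c (fst z) * c' (snd z) * mono (g z))"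
    by (rule sum.group[symmetric, OF finS finT]) (simp add: T_def)
  also have "\<dots> = (\<Sum>y\<in>T. d y * mono y)"
    by (rule sum.cong) (auto simp: d_def sum_distrib_right intro!: sum.cong)
  finally have eq: "p * q = (\<Sum>y\<in>T. d y * mono y)" .
  have "\<forall>y\<in>T. d y \<in> K" unfolding d_def using M M'
    by (auto simp: isNF_def S_def intro!: sf_sum[OF Kf] sf_mult[OF Kf])
  moreover have "\<forall>y\<in>T. \<forall>i\<ge>n. y i = 0" using M M' by (auto simp: isNF_def T_def S_def g_def)
  ultimately have "isNF (p * q) T d" using finT eq by (simp add: isNF_def)
  then show ?case by blast
qed

end


lemma N_comp: "normal_subgroup N G \<Longrightarrow> s \<in> N \<Longrightarrow> t \<in> N \<Longrightarrow> s \<circ> t \<in> N"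
  by (simp add: normal_subgroup_def aut_group_def)
lemma N_invc: "normal_subgroup N G \<Longrightarrow> s \<in> N \<Longrightarrow> inv s \<in> N"
  by (simp add: normal_subgroup_def aut_group_def)

locale qmbasis = qmsetup K k x n G for K k :: "'L::field set" and x n G +
  fixes a :: "nat \<Rightarrow> 'L" and b :: "nat \<Rightarrow> nat \<Rightarrow> int"
  assumes aK: "\<forall>i<n. a i \<in> K \<and> a i \<noteq> 0"
    and yinv: "\<forall>i<n. \<forall>t\<in>N. t (a i * Xm x n (b i)) = a i * Xm x n (b i)"
    and tri: "\<forall>i<n. b i i \<noteq> 0 \<and> (\<forall>j<i. b i j = 0)"
    and Lhyp: "\<forall>m c. c \<in> K \<longrightarrow> c \<noteq> 0 \<longrightarrow> (\<forall>t\<in>N. t (c * Xm x n m) = c * Xm x n m) \<longrightarrow>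
                  (\<exists>kk. \<forall>j<n. m j = (\<Sum>l<n. kk l * b l j))"
begin

definition y where "y i = a i * Xm x n (b i)"

lemma aux_div: "A \<noteq> 0 \<Longrightarrow> c / A * (A * X) = c * (X::'a::field)" by simp

lemma y_nz: "\<forall>i<n. y i \<noteq> 0"
  using aK Xm_nz[OF xnz] by (simp add: y_def)

lemma y_fix: "i < n \<Longrightarrow> t \<in> N \<Longrightarrow> t (y i) = y i"
  using yinv by (simp add: y_def)

lemma Xmy_fix: "t \<in> N \<Longrightarrow> t (Xm y n u) = Xm y n u"
  unfolding Xm_def by (simp add: fa_prod[OF N_aut] fa_powi[OF N_aut] y_fix)

lemma Xmy: "Xm y n u = (\<Prod>l<n. a l powi u l) * Xm x n (\<lambda>j. \<Sum>l<n. u l * b l j)"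
proof -
  have "Xm y n u = (\<Prod>l<n. a l powi u l * Xm x n (b l) powi u l)"
    unfolding Xm_def[of y] y_def by (simp add: power_int_mult_distrib Xm_def)
  also have "\<dots> = (\<Prod>l<n. a l powi u l) * (\<Prod>l<n. Xm x n (b l) powi u l)"
    by (simp add: prod.distrib)
  also have "(\<Prod>l<n. Xm x n (b l) powi u l) = Xm x n (\<lambda>j. \<Sum>l<n. u l * b l j)"
    by (rule Xm_lin[OF xnz]) simp
  finally show ?thesis .
qed

lemma apow_K: "(\<Prod>l<n. a l powi u l) \<in> K" using aK by (auto intro!: sf_prod[OF Kf] sf_powi[OF Kf])
lemma apow_nz: "(\<Prod>l<n. a l powi u l) \<noteq> 0" using aK by (simp add: prod_zero_iff)

lemma tri0: "(\<forall>j<n. (\<Sum>l<n. t l * b l j) = 0) \<Longrightarrow> \<forall>l<n. t l = 0"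
proof -
  assume h: "\<forall>j<n. (\<Sum>l<n. t l * b l j) = 0"
  have "j < n \<longrightarrow> t j = 0" for j
  proof (induction j rule: less_induct)
    case (less j)
    show ?case
    proof
      assume j: "j < n"
      have "(\<Sum>l<n. t l * b l j) = t j * b j j + (\<Sum>l\<in>{..<n} - {j}. t l * b l j)"
        using j by (simp add: sum.remove)
      also have "(\<Sum>l\<in>{..<n} - {j}. t l * b l j) = 0"
      proof (rule sum.neutral, intro ballI)
        fix l assume l: "l \<in> {..<n} - {j}"
        show "t l * b l j = 0"
        proof (cases "l < j")
          case True then show ?thesis using less j by auto
        next
          case False then have "j < l" using l by auto
          then show ?thesis using tri l by auto
        qed
      qed
      finally have "t j * b j j = 0" using h j by simp
      then show "t j = 0" using tri j by auto
    qed
  qed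
  then show ?thesis by blast
qed

lemma tri_inj: "(\<forall>j<n. (\<Sum>l<n. u l * b l j) = (\<Sum>l<n. v l * b l j)) \<Longrightarrow> \<forall>l<n. u l = v l"
proof -
  assume h: "\<forall>j<n. (\<Sum>l<n. u l * b l j) = (\<Sum>l<n. v l * b l j)"
  have "\<forall>j<n. (\<Sum>l<n. (u l - v l) * b l j) = 0"
    using h by (simp add: left_diff_distrib sum_subtractf)
  then have "\<forall>l<n. u l - v l = 0" by (rule tri0)
  then show ?thesis by simp
qed

lemma uniq_y:
  assumes "c \<in> K" "c \<noteq> 0" "c' \<in> K" "c * Xm y n u = c' * Xm y n v"
  shows "\<forall>j<n. u j = v j"
proof -
  have "(c * (\<Prod>l<n. a l powi u l)) * Xm x n (\<lambda>j. \<Sum>l<n. u l * b l j) =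
        (c' * (\<Prod>l<n. a l powi v l)) * Xm x n (\<lambda>j. \<Sum>l<n. v l * b l j)"
    using assms(4) by (simp add: Xmy mult.assoc)
  then have "\<forall>j<n. (\<Sum>l<n. u l * b l j) = (\<Sum>l<n. v l * b l j)"
  proof (rule uniq[rotated 3])
    show "c * (\<Prod>l<n. a l powi u l) \<in> K" by (rule sf_mult[OF Kf assms(1) apow_K])
    show "c' * (\<Prod>l<n. a l powi v l) \<in> K" by (rule sf_mult[OF Kf assms(3) apow_K])
    show "c * (\<Prod>l<n. a l powi u l) \<noteq> 0" using assms(2) apow_nz[of u] by (metis mult_eq_0_iff)
  qed
  then show ?thesis by (rule tri_inj)
qed

definition F where "F = field_gen (fixed K N) (y ` {..<n})"

lemma F_sub: "is_subfield F" by (simp add: F_def field_gen_sub)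
lemma F_y: "i < n \<Longrightarrow> y i \<in> F" unfolding F_def by (rule subsetD[OF field_gen_S]) simp
lemma F_fix: "c \<in> fixed K N \<Longrightarrow> c \<in> F" unfolding F_def by (rule subsetD[OF field_gen_F])
lemma F_Xmy: "Xm y n u \<in> F" unfolding Xm_def
  by (rule sf_prod[OF F_sub], rule sf_powi[OF F_sub], rule F_y, simp)

lemma term_F:
  assumes c: "c \<in> K" and inv: "\<forall>t\<in>N. t (c * Xm x n u) = c * Xm x n u"
  shows "c * Xm x n u \<in> F"
proof (cases "c = 0")
  case True then show ?thesis using sf_0[OF F_sub] by simp
next
  case False
  have "\<exists>kk. \<forall>j<n. u j = (\<Sum>l<n. kk l * b l j)" using Lhyp c False inv by blast
  then obtain kk where kk: "\<forall>j<n. u j = (\<Sum>l<n. kk l * b l j)" ..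
  have ux: "Xm x n u = Xm x n (\<lambda>j. \<Sum>l<n. kk l * b l j)" by (rule Xm_cong[OF xnz]) (use kk in blast)
  define w where "w = c / (\<Prod>l<n. a l powi kk l)"
  have eq: "c * Xm x n u = w * Xm y n kk"
    unfolding w_def Xmy ux by (rule aux_div[symmetric, OF apow_nz])
  have wK: "w \<in> K" unfolding w_def using c apow_K by (rule sf_divide[OF Kf])
  have "t w = w" if t: "t \<in> N" for t
  proof -
    have "t (c * Xm x n u) = c * Xm x n u" using inv t by blast
    then have "t (w * Xm y n kk) = w * Xm y n kk" by (simp only: eq)
    then have "t w * Xm y n kk = w * Xm y n kk" by (simp only: fa_mult[OF N_aut[OF t]] Xmy_fix[OF t])
    then show ?thesis using Xm_nz[OF y_nz, of kk] by (simp only: mult_cancel_right) blast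
  qed
  then have "w \<in> fixed K N" using wK by (simp add: fixed_def)
  then have "w * Xm y n kk \<in> F" using F_fix F_Xmy sf_mult[OF F_sub] by blast
  then show ?thesis by (simp only: eq)
qed

lemma inv_PP_F:
  assumes p: "p \<in> PP" and inv: "\<forall>t\<in>N. t p = p"
  shows "p \<in> F"
proof -
  obtain M c where M: "isNF p M c" using NF[OF p] by blast
  have fin: "finite M" and supp: "\<forall>m\<in>M. \<forall>i\<ge>n. m i = 0" and cK: "\<forall>m\<in>M. c m \<in> K"
    and pe: "p = (\<Sum>m\<in>M. c m * mono m)" using M by (auto simp: isNF_def)
  have term_inv: "t (c m * mono m) = c m * mono m" if t: "t \<in> N" and m: "m \<in> M" for t m
  proof -
    have ex: "\<forall>m. \<exists>e. e \<in> K \<and> e \<noteq> 0 \<and> t (Xm x n (\<lambda>i. int (m i))) = e * Xm x n (\<lambda>i. int (m i))"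
      using N_Xm[OF t] by blast
    then obtain e where e: "\<And>m. e m \<in> K \<and> e m \<noteq> 0 \<and> t (Xm x n (\<lambda>i. int (m i))) = e m * Xm x n (\<lambda>i. int (m i))" by metis
    define d where "d m = t (c m) * e m - c m" for m
    have "(\<Sum>m\<in>M. d m * Xm x n (\<lambda>i. int (m i))) = t p - p"
      unfolding pe d_def
      by (simp add: fa_sum[OF N_aut[OF t]] fa_mult[OF N_aut[OF t]] e left_diff_distrib
          sum_subtractf mono_Xm mult.assoc)
    also have "\<dots> = 0" using inv t by simp
    finally have s0: "(\<Sum>m\<in>M. d m * Xm x n (\<lambda>i. int (m i))) = 0" .
    have "\<forall>m\<in>M. d m = 0"
    proof (rule LI[OF fin _ _ s0])
      show "\<forall>m\<in>M. d m \<in> K"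
      proof
        fix m assume m: "m \<in> M"
        have tc: "t (c m) \<in> K" using G_K[of t "c m"] N_G t cK m by blast
        have "e m \<in> K" using e by blast
        then show "d m \<in> K" unfolding d_def using tc cK m
          by (intro sf_diff[OF Kf] sf_mult[OF Kf]) auto
      qed
      show "\<forall>m\<in>M. \<forall>m'\<in>M. (\<forall>j<n. int (m j) = int (m' j)) \<longrightarrow> m = m'"
      proof (intro ballI impI)
        fix m m' assume mm: "m \<in> M" "m' \<in> M" "\<forall>j<n. int (m j) = int (m' j)"
        show "m = m'"
        proof
          fix i show "m i = m' i"
          proof (cases "i < n")
            case True thus ?thesis using mm by simp
          next
            case False thus ?thesis using supp mm(1,2) by (metis not_less)
          qed
        qed
      qed
    qed
    then have "d m = 0" using m by blast
    then show ?thesis unfolding d_def mono_Xm using fa_mult[OF N_aut[OF t]] e by simp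
  qed
  have "c m * mono m \<in> F" if m: "m \<in> M" for m
    unfolding mono_Xm
  proof (rule term_F)
    show "c m \<in> K" using cK m by blast
    show "\<forall>t\<in>N. t (c m * Xm x n (\<lambda>i. int (m i))) = c m * Xm x n (\<lambda>i. int (m i))"
      using term_inv m unfolding mono_Xm by blast
  qed
  then show ?thesis unfolding pe by (rule sf_sum[OF F_sub])
qed

end


context qmsetup begin

lemma N_comp': "s \<in> N \<Longrightarrow> t \<in> N \<Longrightarrow> s \<circ> t \<in> N" using N_comp[OF N_normal] .
lemma N_inv': "s \<in> N \<Longrightarrow> inv s \<in> N" using N_invc[OF N_normal] .

lemma norm_fix: assumes s: "s \<in> N" shows "s (\<Prod>t\<in>N. t w) = (\<Prod>t\<in>N. t w)"
proof -
  have sG: "s \<in> G" using s N_G by blast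
  have inj: "inj_on ((\<circ>) s) N"
  proof (rule inj_onI)
    fix t t' assume "s \<circ> t = s \<circ> t'"
    then have "\<And>a. s (t a) = s (t' a)" by (metis comp_apply)
    then show "t = t'" using fa_inj[OF N_aut[OF s]] by (auto simp: fun_eq_iff dest: injD)
  qed
  have im: "(\<circ>) s ` N = N"
  proof
    show "(\<circ>) s ` N \<subseteq> N" using N_comp' s by blast
    show "N \<subseteq> (\<circ>) s ` N"
    proof
      fix t assume t: "t \<in> N"
      have "t = s \<circ> (inv s \<circ> t)" using G_inv_r[OF sG] by (simp add: fun_eq_iff)
      moreover have "inv s \<circ> t \<in> N" using N_comp' N_inv' s t by blast
      ultimately show "t \<in> (\<circ>) s ` N" by blast
    qed
  qed
  have "s (\<Prod>t\<in>N. t w) = (\<Prod>t\<in>N. (s \<circ> t) w)" by (simp add: fa_prod[OF N_aut[OF s]])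
  also have "\<dots> = prod (\<lambda>t. t w) ((\<circ>) s ` N)" by (subst prod.reindex[OF inj]) (simp add: comp_def)
  also have "\<dots> = (\<Prod>t\<in>N. t w)" using im by simp
  finally show ?thesis .
qed

end

context qmbasis begin

lemma PP_N: "t \<in> N \<Longrightarrow> p \<in> PP \<Longrightarrow> t p \<in> PP"
proof -
  assume t: "t \<in> N" and p: "p \<in> PP"
  from p show "t p \<in> PP"
  proof (induction p rule: PP.induct)
    case (cK c) then show ?case using G_K[of t c] N_G t PP.cK by blast
  next
    case (cx i)
    then obtain c where "c \<in> K" "t (x i) = c * x i" using t by (auto simp: N_def)
    then show ?case using PP.cK PP.cx PP.cmul cx by metis
  next
    case (cadd p q) then show ?case using fa_add[OF N_aut[OF t]] PP.cadd by metis
  next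
    case (cmul p q) then show ?case using fa_mult[OF N_aut[OF t]] PP.cmul by metis
  next
    case (cneg p) then show ?case using fa_uminus[OF N_aut[OF t]] PP.cneg by metis
  qed
qed

lemma F_fixed: "F \<subseteq> fixed UNIV N"
  unfolding F_def
proof (rule field_gen_least[OF fixed_sub])
  show "fixed K N \<subseteq> fixed UNIV N" by (auto simp: fixed_def)
  show "y ` {..<n} \<subseteq> fixed UNIV N" using y_fix by (auto simp: fixed_def)
qed

lemma fixed_F: "fixed UNIV N \<subseteq> F"
proof
  fix f assume f: "f \<in> fixed UNIV N"
  obtain p q where pq: "p \<in> PP" "q \<in> PP" "q \<noteq> 0" "f = p / q" using R_all by blast
  define Q where "Q = (\<Prod>t\<in>N. t q)"
  define P where "P = p * (\<Prod>t\<in>N - {id}. t q)"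
  have QPP: "Q \<in> PP" unfolding Q_def by (rule PP_prod) (use PP_N pq in blast)
  have PPP: "P \<in> PP" unfolding P_def by (intro PP.cmul PP_prod pq(1)) (use PP_N pq in blast)
  have Qnz: "Q \<noteq> 0" unfolding Q_def using finN fa_nz[OF N_aut] pq(3) by (simp add: prod_zero_iff)
  have Qe: "Q = q * (\<Prod>t\<in>N - {id}. t q)" unfolding Q_def
    using prod.remove[OF finN id_N, of "\<lambda>t. t q"] by simp
  have Rnz: "(\<Prod>t\<in>N - {id}. t q) \<noteq> 0" using Qnz Qe by auto
  have fPQ: "f = P / Q" unfolding P_def Qe using pq(3,4) Rnz by simp
  have Qf: "\<forall>t\<in>N. t Q = Q" unfolding Q_def using norm_fix by blast
  have Pf: "\<forall>t\<in>N. t P = P"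
  proof
    fix t assume t: "t \<in> N"
    have "P = f * Q" using fPQ Qnz by simp
    moreover have "t f = f" using f t by (simp add: fixed_def)
    moreover have "t Q = Q" using Qf t by blast
    ultimately show "t P = P" using fa_mult[OF N_aut[OF t]] by simp
  qed
  have "P \<in> F" by (rule inv_PP_F[OF PPP Pf])
  moreover have "Q \<in> F" by (rule inv_PP_F[OF QPP Qf])
  ultimately show "f \<in> F" unfolding fPQ by (rule sf_divide[OF F_sub])
qed

lemma part_i1: "field_gen (fixed K N) (y ` {..<n}) = fixed UNIV N"
  using F_fixed fixed_F F_def by blast

lemma part_alg: "alg_indep (fixed K N) y n"
  unfolding alg_indep_def
proof (intro allI impI)
  fix c :: "(nat \<Rightarrow> nat) \<Rightarrow> 'L" and M
  assume h: "finite M \<and> (\<forall>m\<in>M. \<forall>i\<ge>n. m i = 0) \<and> (\<forall>m\<in>M. c m \<in> fixed K N) \<and>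
           (\<Sum>m\<in>M. c m * (\<Prod>i<n. y i ^ m i)) = 0"
  have h1: "finite M" and h2: "\<forall>m\<in>M. \<forall>i\<ge>n. m i = 0" and h3: "\<forall>m\<in>M. c m \<in> fixed K N"
    and h4: "(\<Sum>m\<in>M. c m * (\<Prod>i<n. y i ^ m i)) = 0" using h by blast+
  define \<phi> where "\<phi> m = (\<lambda>j. \<Sum>l<n. int (m l) * b l j)" for m :: "nat \<Rightarrow> nat"
  define d where "d m = c m * (\<Prod>l<n. a l powi int (m l))" for m
  have py: "(\<Prod>i<n. y i ^ m i) = (\<Prod>l<n. a l powi int (m l)) * Xm x n (\<phi> m)" for m
  proof -
    have "(\<Prod>i<n. y i ^ m i) = Xm y n (\<lambda>i. int (m i))" unfolding Xm_def by (simp add: power_int_of_nat)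
    also have "\<dots> = (\<Prod>l<n. a l powi int (m l)) * Xm x n (\<phi> m)" unfolding \<phi>_def by (rule Xmy)
    finally show ?thesis .
  qed
  have "\<forall>m\<in>M. d m = 0"
  proof (rule LI)
    show "finite M" by (rule h1)
    show "\<forall>m\<in>M. d m \<in> K"
    proof
      fix m assume m: "m \<in> M"
      have "c m \<in> K" using h3 m by (simp add: fixed_def)
      then show "d m \<in> K" unfolding d_def by (rule sf_mult[OF Kf _ apow_K])
    qed
    show "\<forall>m\<in>M. \<forall>m'\<in>M. (\<forall>j<n. \<phi> m j = \<phi> m' j) \<longrightarrow> m = m'"
    proof (intro ballI impI)
      fix m m' assume mm: "m \<in> M" "m' \<in> M" "\<forall>j<n. \<phi> m j = \<phi> m' j"
      have e: "\<forall>l<n. int (m l) = int (m' l)"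
        by (rule tri_inj[of "\<lambda>l. int (m l)" "\<lambda>l. int (m' l)"]) (use mm(3) in \<open>simp add: \<phi>_def\<close>)
      show "m = m'"
      proof
        fix i show "m i = m' i"
        proof (cases "i < n")
          case True thus ?thesis using e by simp
        next
          case False thus ?thesis using h2 mm(1,2) by (metis not_less)
        qed
      qed
    qed
    show "(\<Sum>m\<in>M. d m * Xm x n (\<phi> m)) = 0" using h4 by (simp only: py d_def mult.assoc)
  qed
  then show "\<forall>m\<in>M. c m = 0"
  proof (intro ballI)
    fix m assume "\<forall>m\<in>M. d m = 0" "m \<in> M"
    then have "c m * (\<Prod>l<n. a l powi int (m l)) = 0" unfolding d_def by blast
    then show "c m = 0" using apow_nz[of "\<lambda>l. int (m l)"] by (simp only: mult_eq_0_iff) blast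
  qed
qed

end


lemma swap_sum: "(\<Sum>t<(n::nat). (\<Sum>r<n. k r * B r t) * (M t::int)) = (\<Sum>r<n. k r * (\<Sum>t<n. B r t * M t))"
  unfolding sum_distrib_right sum_distrib_left mult.assoc by (rule sum.swap)

lemma delta_sum2: "l < (n::nat) \<Longrightarrow> (\<Sum>t<n. (c * (if t = l then 1 else 0)) * (M t::int)) = c * M l"
proof -
  assume l: "l < n"
  have "(\<Sum>t<n. (c * (if t = l then 1 else 0)) * M t) = (\<Sum>t<n. if t = l then c * M t else 0)"
    by (rule sum.cong) auto
  also have "\<dots> = c * M l" using l by simp
  finally show ?thesis .
qed

context qmbasis begin

lemma y_fixU: "i < n \<Longrightarrow> y i \<in> fixed UNIV N" using y_fix by (simp add: fixed_def)

lemma E: assumes s: "s \<in> G"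
  shows "\<exists>A. \<forall>j<n. \<exists>c. c \<in> K \<and> c \<noteq> 0 \<and> s (y j) = c * Xm y n (\<lambda>i. A i j)"
proof -
  obtain M e where Me: "\<forall>j<n. e j \<in> K \<and> e j \<noteq> 0 \<and> s (x j) = e j * Xm x n (\<lambda>i. M i j)"
    using G_mat[OF s] by blast
  have fs: "field_aut s" using G_aut[OF s] .
  have sx: "\<forall>j<n. s (x j) = e j * Xm x n (\<lambda>i. M i j)" using Me by blast
  define Mb where "Mb j = (\<lambda>i. \<Sum>t<n. b j t * M i t)" for j
  define c0 where "c0 j = s (a j) * (\<Prod>t<n. e t powi b j t)" for j
  have sy: "s (y j) = c0 j * Xm x n (Mb j)" for j
    unfolding y_def c0_def Mb_def
    by (simp add: fa_mult[OF fs] Xm_aut[OF xnz fs sx] mult.assoc)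
  have c0K: "c0 j \<in> K" if "j < n" for j
    unfolding c0_def using G_K[OF s] aK that Me
    by (intro sf_mult[OF Kf] sf_prod[OF Kf] sf_powi[OF Kf]) auto
  have c0nz: "c0 j \<noteq> 0" if "j < n" for j
    unfolding c0_def using fa_nz[OF fs] aK that Me by (simp add: prod_zero_iff)
  have "\<exists>kk. \<forall>i<n. Mb j i = (\<Sum>l<n. kk l * b l i)" if j: "j < n" for j
  proof -
    have "\<forall>t\<in>N. t (c0 j * Xm x n (Mb j)) = c0 j * Xm x n (Mb j)"
      using N_pres[OF s y_fixU[OF j]] sy[of j] by (simp add: fixed_def)
    then show ?thesis using Lhyp c0K[OF j] c0nz[OF j] by blast
  qed
  then obtain KK where KK: "\<forall>j<n. \<forall>i<n. Mb j i = (\<Sum>l<n. KK j l * b l i)" by metis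
  define A where "A l j = KK j l" for l j
  have "\<exists>c. c \<in> K \<and> c \<noteq> 0 \<and> s (y j) = c * Xm y n (\<lambda>i. A i j)" if j: "j < n" for j
  proof -
    define P where "P = (\<Prod>l<n. a l powi A l j)"
    have "Xm y n (\<lambda>i. A i j) = P * Xm x n (\<lambda>i. \<Sum>l<n. A l j * b l i)" unfolding P_def by (rule Xmy)
    also have "Xm x n (\<lambda>i. \<Sum>l<n. A l j * b l i) = Xm x n (Mb j)"
      by (rule Xm_cong[OF xnz]) (use KK j in \<open>simp add: A_def\<close>)
    finally have eq: "Xm y n (\<lambda>i. A i j) = P * Xm x n (Mb j)" .
    have Pnz: "P \<noteq> 0" unfolding P_def by (rule apow_nz)
    have "s (y j) = (c0 j / P) * Xm y n (\<lambda>i. A i j)" unfolding eq sy using Pnz by simp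
    moreover have "c0 j / P \<in> K" unfolding P_def by (rule sf_divide[OF Kf c0K[OF j] apow_K])
    moreover have "c0 j / P \<noteq> 0" using Pnz c0nz[OF j] by simp
    ultimately show ?thesis by blast
  qed
  then show ?thesis by blast
qed

lemma GLm:
  assumes s: "s \<in> G" and s': "s' \<in> G"
    and A: "\<forall>j<n. \<exists>c. c \<in> K \<and> c \<noteq> 0 \<and> s (y j) = c * Xm y n (\<lambda>i. A i j)"
    and A': "\<forall>j<n. \<exists>c. c \<in> K \<and> c \<noteq> 0 \<and> s' (y j) = c * Xm y n (\<lambda>i. A' i j)"
    and ss: "\<And>z. s (s' z) = z"
  shows "\<forall>i<n. \<forall>j<n. (\<Sum>l<n. A i l * A' l j) = (if i = j then 1 else 0)"
proof (intro allI impI)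
  fix i j assume i: "i < n" and j: "j < n"
  obtain cs where cs: "\<forall>l<n. cs l \<in> K \<and> cs l \<noteq> 0 \<and> s (y l) = cs l * Xm y n (\<lambda>i. A i l)"
    using A by metis
  have fs: "field_aut s" using G_aut[OF s] .
  have sy: "\<forall>l<n. s (y l) = cs l * Xm y n (\<lambda>i. A i l)" using cs by blast
  obtain c' where c': "c' \<in> K" "s' (y j) = c' * Xm y n (\<lambda>i. A' i j)" using A' j by blast
  have "y j = s (s' (y j))" using ss by simp
  also have "\<dots> = s c' * ((\<Prod>l<n. cs l powi A' l j) * Xm y n (\<lambda>i. \<Sum>l<n. A' l j * A i l))"
    unfolding c'(2) by (simp add: fa_mult[OF fs] Xm_aut[OF y_nz fs sy])
  finally have "1 * Xm y n (\<lambda>i. if i = j then 1 else 0) =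
      (s c' * (\<Prod>l<n. cs l powi A' l j)) * Xm y n (\<lambda>i. \<Sum>l<n. A' l j * A i l)"
    using Xm_delta[OF y_nz j] by (simp add: mult.assoc)
  then have "\<forall>i<n. (if i = j then 1 else 0) = (\<Sum>l<n. A' l j * A i l)"
  proof (rule uniq_y[rotated 3])
    show "(1::'L) \<in> K" by (rule sf_1[OF Kf])
    show "(1::'L) \<noteq> 0" by simp
    show "s c' * (\<Prod>l<n. cs l powi A' l j) \<in> K"
      using G_K[OF s c'(1)] cs by (intro sf_mult[OF Kf] sf_prod[OF Kf] sf_powi[OF Kf]) auto
  qed
  then show "(\<Sum>l<n. A i l * A' l j) = (if i = j then 1 else 0)" using i by (simp add: mult.commute)
qed

lemma fixedNG: "fixed (fixed K N) G = k"
proof -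
  have "fixed (fixed K N) G = fixed K G" using N_G unfolding fixed_def by blast
  then show ?thesis using G_fixK by simp
qed

lemma part_qm: "qm_action G k (fixed K N) y n"
  unfolding qm_action_def
proof (intro conjI ballI)
  show "\<And>s. s \<in> G \<Longrightarrow> s ` fixed K N \<subseteq> fixed K N" using N_presK by blast
  show "fixed (fixed K N) G = k" by (rule fixedNG)
  fix s assume s: "s \<in> G"
  obtain A where A: "\<forall>j<n. \<exists>c. c \<in> K \<and> c \<noteq> 0 \<and> s (y j) = c * Xm y n (\<lambda>i. A i j)"
    using E[OF s] by blast
  obtain A' where A': "\<forall>j<n. \<exists>c. c \<in> K \<and> c \<noteq> 0 \<and> inv s (y j) = c * Xm y n (\<lambda>i. A' i j)"
    using E[OF G_inv[OF s]] by blast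
  have g1: "\<forall>i<n. \<forall>j<n. (\<Sum>l<n. A i l * A' l j) = (if i = j then 1 else 0)"
    by (rule GLm[OF s G_inv[OF s] A A']) (rule G_inv_r[OF s])
  have g2: "\<forall>i<n. \<forall>j<n. (\<Sum>l<n. A' i l * A l j) = (if i = j then 1 else 0)"
    by (rule GLm[OF G_inv[OF s] s A' A]) (rule G_inv_l[OF s])
  have gl: "gl_int n A" unfolding gl_int_def using g1 g2 by blast
  have "\<exists>c. c \<in> fixed K N \<and> c \<noteq> 0 \<and> s (y j) = c * lmon y n A j" if j: "j < n" for j
  proof -
    obtain c where c: "c \<in> K" "c \<noteq> 0" "s (y j) = c * Xm y n (\<lambda>i. A i j)" using A j by blast
    have "t c = c" if t: "t \<in> N" for t
    proof -
      have "t (s (y j)) = s (y j)" using N_pres[OF s y_fixU[OF j]] t by (simp add: fixed_def)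
      then have "t c * Xm y n (\<lambda>i. A i j) = c * Xm y n (\<lambda>i. A i j)"
        using c(3) fa_mult[OF N_aut[OF t]] Xmy_fix[OF t] by simp
      then show ?thesis using Xm_nz[OF y_nz] by simp
    qed
    then have "c \<in> fixed K N" using c(1) by (simp add: fixed_def)
    then show ?thesis unfolding lmon_Xm using c by blast
  qed
  then show "\<exists>A. qm_matrix s (fixed K N) y n A" unfolding qm_matrix_def using gl by blast
qed

end


context qmsetup begin

lemma norm_elem: assumes l: "l < n"
  shows "\<exists>c. c \<in> K \<and> c \<noteq> 0 \<and> (\<forall>t\<in>N. t (c * Xm x n (\<lambda>i. int (card N) * (if i = l then 1 else 0))) =
            c * Xm x n (\<lambda>i. int (card N) * (if i = l then 1 else 0)))"
proof -
  have "\<forall>t\<in>N. \<exists>e. e \<in> K \<and> e \<noteq> 0 \<and> t (x l) = e * x l"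
  proof
    fix t assume t: "t \<in> N"
    obtain e where "\<forall>j<n. e j \<in> K \<and> e j \<noteq> 0 \<and> t (x j) = e j * x j" using Nx[OF t] by blast
    then show "\<exists>e. e \<in> K \<and> e \<noteq> 0 \<and> t (x l) = e * x l" using l by blast
  qed
  then obtain ee where ee: "\<forall>t\<in>N. ee t \<in> K \<and> ee t \<noteq> 0 \<and> t (x l) = ee t * x l" by metis
  define c where "c = (\<Prod>t\<in>N. ee t)"
  have X: "Xm x n (\<lambda>i. int (card N) * (if i = l then 1 else 0)) = x l ^ card N"
  proof -
    have "Xm x n (\<lambda>i. int (card N) * (if i = l then 1 else 0)) = Xm x n (\<lambda>i. if i = l then 1 else 0) powi int (card N)"
      by (rule Xm_powi[OF xnz, symmetric])
    also have "\<dots> = x l ^ card N" using Xm_delta[OF xnz l] by (simp add: power_int_of_nat)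
    finally show ?thesis .
  qed
  have w: "(\<Prod>t\<in>N. t (x l)) = c * x l ^ card N"
  proof -
    have "(\<Prod>t\<in>N. t (x l)) = (\<Prod>t\<in>N. ee t * x l)" by (rule prod.cong) (use ee in auto)
    also have "\<dots> = c * x l ^ card N" by (simp add: c_def prod.distrib)
    finally show ?thesis .
  qed
  have cK: "c \<in> K" unfolding c_def using ee by (intro sf_prod[OF Kf]) blast
  have cnz: "c \<noteq> 0" unfolding c_def using ee finN by (simp add: prod_zero_iff)
  have "\<forall>t\<in>N. t (c * x l ^ card N) = c * x l ^ card N" using norm_fix w by metis
  then show ?thesis using cK cnz X by metis
qed

end

context qmbasis begin

lemma part_inj:
  assumes s: "s \<in> G" and s': "s' \<in> G"
    and As: "qm_matrix s (fixed K N) y n A" and As': "qm_matrix s' (fixed K N) y n A"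
  shows "inv s' \<circ> s \<in> N"
proof -
  define g where "g = inv s' \<circ> s"
  have gG: "g \<in> G" unfolding g_def using G_comp G_inv s s' by blast
  have fg: "field_aut g" using G_aut[OF gG] .
  have fi: "field_aut (inv s')" using G_aut G_inv s' by blast
  obtain M e where Me: "\<forall>j<n. e j \<in> K \<and> e j \<noteq> 0 \<and> g (x j) = e j * Xm x n (\<lambda>i. M i j)"
    using G_mat[OF gG] by blast
  have gx: "\<forall>j<n. g (x j) = e j * Xm x n (\<lambda>i. M i j)" using Me by blast
  define Mb where "Mb j = (\<lambda>i. \<Sum>t<n. b j t * M i t)" for j
  have MbE: "\<forall>i<n. Mb j i = b j i" if j: "j < n" for j
  proof -
    obtain c where c: "c \<in> fixed K N" "c \<noteq> 0" "s (y j) = c * lmon y n A j"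
      using As j by (auto simp: qm_matrix_def)
    obtain c' where c': "c' \<in> fixed K N" "c' \<noteq> 0" "s' (y j) = c' * lmon y n A j"
      using As' j by (auto simp: qm_matrix_def)
    have cK: "c \<in> K" "c' \<in> K" using c c' by (auto simp: fixed_def)
    have sy: "s (y j) = (c / c') * s' (y j)" using c(3) c'(2,3) by simp
    have "g (y j) = inv s' ((c / c') * s' (y j))" unfolding g_def by (simp only: comp_apply sy)
    also have "\<dots> = inv s' (c / c') * inv s' (s' (y j))" by (rule fa_mult[OF fi])
    also have "\<dots> = inv s' (c / c') * y j" by (simp only: G_inv_l[OF s'])
    finally have gy: "g (y j) = inv s' (c / c') * y j" .
    have dK: "inv s' (c / c') \<in> K" using G_K[OF G_inv[OF s'] sf_divide[OF Kf cK]] .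
    have "g (y j) = (g (a j) * (\<Prod>t<n. e t powi b j t)) * Xm x n (Mb j)"
      unfolding y_def Mb_def by (simp add: fa_mult[OF fg] Xm_aut[OF xnz fg gx] mult.assoc)
    then have "(g (a j) * (\<Prod>t<n. e t powi b j t)) * Xm x n (Mb j) = (inv s' (c / c') * a j) * Xm x n (b j)"
      using gy unfolding y_def by (simp add: mult.assoc)
    then show ?thesis
    proof (rule uniq[rotated 3])
      show "g (a j) * (\<Prod>t<n. e t powi b j t) \<in> K"
        using G_K[OF gG] aK j Me by (intro sf_mult[OF Kf] sf_prod[OF Kf] sf_powi[OF Kf]) auto
      show "g (a j) * (\<Prod>t<n. e t powi b j t) \<noteq> 0"
        using fa_nz[OF fg] aK j Me by (simp add: prod_zero_iff)
      show "inv s' (c / c') * a j \<in> K" using dK aK j by (intro sf_mult[OF Kf]) auto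
    qed
  qed
  have Mid: "M i l = (if i = l then 1 else 0)" if i: "i < n" and l: "l < n" for i l
  proof -
    obtain c where c: "c \<in> K" "c \<noteq> 0" "\<forall>t\<in>N. t (c * Xm x n (\<lambda>i. int (card N) * (if i = l then 1 else 0))) =
            c * Xm x n (\<lambda>i. int (card N) * (if i = l then 1 else 0))"
      using norm_elem[OF l] by blast
    obtain kk where kk: "\<forall>j<n. int (card N) * (if j = l then 1 else 0) = (\<Sum>r<n. kk r * b r j)"
      using Lhyp c by blast
    have "int (card N) * M i l = (\<Sum>t<n. (int (card N) * (if t = l then 1 else 0)) * M i t)"
      using delta_sum2[OF l] by simp
    also have "\<dots> = (\<Sum>t<n. (\<Sum>r<n. kk r * b r t) * M i t)"
      by (rule sum.cong) (use kk in auto)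
    also have "\<dots> = (\<Sum>r<n. kk r * (\<Sum>t<n. b r t * M i t))" by (rule swap_sum)
    also have "\<dots> = (\<Sum>r<n. kk r * b r i)"
      by (rule sum.cong) (use MbE i in \<open>auto simp: Mb_def\<close>)
    also have "\<dots> = int (card N) * (if i = l then 1 else 0)" using kk i by simp
    finally have "int (card N) * M i l = int (card N) * (if i = l then 1 else 0)" .
    then show ?thesis using cardN by simp
  qed
  have "\<exists>c\<in>K. g (x l) = c * x l" if l: "l < n" for l
  proof -
    have "Xm x n (\<lambda>i. M i l) = Xm x n (\<lambda>i. if i = l then 1 else 0)"
      by (rule Xm_cong[OF xnz]) (use Mid l in simp)
    then have "g (x l) = e l * x l" using gx l Xm_delta[OF xnz l] by simp
    then show ?thesis using Me l by blast
  qed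
  then show ?thesis using gG unfolding g_def N_def by blast
qed

end


context qmsetup begin

definition Lset where
  "Lset = {m. \<exists>c. c \<in> K \<and> c \<noteq> 0 \<and> (\<forall>t\<in>N. t (c * Xm x n m) = c * Xm x n m)}"

lemma L_comb:
  assumes m: "m \<in> Lset" and m': "m' \<in> Lset"
  shows "(\<lambda>j. m j + q * m' j) \<in> Lset"
proof -
  obtain c where c: "c \<in> K" "c \<noteq> 0" "\<forall>t\<in>N. t (c * Xm x n m) = c * Xm x n m" using m Lset_def by blast
  obtain c' where c': "c' \<in> K" "c' \<noteq> 0" "\<forall>t\<in>N. t (c' * Xm x n m') = c' * Xm x n m'" using m' Lset_def by blast
  have eq: "(c * c' powi q) * Xm x n (\<lambda>j. m j + q * m' j) = (c * Xm x n m) * (c' * Xm x n m') powi q"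
    by (simp add: Xm_add[OF xnz] Xm_powi[OF xnz, symmetric] power_int_mult_distrib mult_ac)
  have "t ((c * c' powi q) * Xm x n (\<lambda>j. m j + q * m' j)) = (c * c' powi q) * Xm x n (\<lambda>j. m j + q * m' j)"
    if t: "t \<in> N" for t
  proof -
    have h1: "t (c * Xm x n m) = c * Xm x n m" using c(3) t by blast
    have h2: "t (c' * Xm x n m') = c' * Xm x n m'" using c'(3) t by blast
    have "t ((c * Xm x n m) * (c' * Xm x n m') powi q) = t (c * Xm x n m) * t ((c' * Xm x n m') powi q)"
      by (rule fa_mult[OF N_aut[OF t]])
    also have "t ((c' * Xm x n m') powi q) = t (c' * Xm x n m') powi q" by (rule fa_powi[OF N_aut[OF t]])
    finally show ?thesis unfolding eq h1 h2 .
  qed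
  moreover have "c * c' powi q \<in> K" using c c' by (intro sf_mult[OF Kf] sf_powi[OF Kf])
  moreover have "c * c' powi q \<noteq> 0" using c c' by simp
  ultimately show ?thesis unfolding Lset_def by blast
qed

definition Di where "Di i = {m \<in> Lset. \<forall>j<i. m j = 0}"
definition dd where "dd i = (LEAST d::nat. 0 < d \<and> (\<exists>m\<in>Di i. m i = int d))"
definition bb where "bb i = (SOME m. m \<in> Di i \<and> m i = int (dd i))"
definition aa where "aa i = (SOME c. c \<in> K \<and> c \<noteq> 0 \<and> (\<forall>t\<in>N. t (c * Xm x n (bb i)) = c * Xm x n (bb i)))"

lemma ex_pos: "i < n \<Longrightarrow> \<exists>d::nat. 0 < d \<and> (\<exists>m\<in>Di i. m i = int d)"
proof -
  assume i: "i < n"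
  define v where "v = (\<lambda>j. int (card N) * (if j = i then 1 else 0))"
  have "v \<in> Lset"
    unfolding Lset_def mem_Collect_eq v_def by (rule norm_elem[OF i])
  moreover have "\<forall>j<i. v j = 0" unfolding v_def by simp
  ultimately have D: "v \<in> Di i" unfolding Di_def by blast
  have "v i = int (card N)" unfolding v_def by simp
  then show ?thesis using cardN D by blast
qed

lemma dd_props: "i < n \<Longrightarrow> 0 < dd i \<and> (\<exists>m\<in>Di i. m i = int (dd i))"
  unfolding dd_def by (rule LeastI_ex[OF ex_pos])

lemma dd_min: "0 < d \<Longrightarrow> m \<in> Di i \<Longrightarrow> m i = int d \<Longrightarrow> dd i \<le> d"
proof -
  assume h: "0 < d" "m \<in> Di i" "m i = int d"
  then have "0 < d \<and> (\<exists>m\<in>Di i. m i = int d)" by blast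
  then show "dd i \<le> d" unfolding dd_def by (rule Least_le)
qed

lemma bb_props: "i < n \<Longrightarrow> bb i \<in> Di i \<and> bb i i = int (dd i)"
proof -
  assume i: "i < n"
  then have "\<exists>m. m \<in> Di i \<and> m i = int (dd i)" using dd_props by blast
  then show ?thesis unfolding bb_def by (rule someI_ex)
qed

lemma aa_props: "i < n \<Longrightarrow> aa i \<in> K \<and> aa i \<noteq> 0 \<and> (\<forall>t\<in>N. t (aa i * Xm x n (bb i)) = aa i * Xm x n (bb i))"
proof -
  assume i: "i < n"
  have "bb i \<in> Di i" using bb_props[OF i] by blast
  then have "bb i \<in> Lset" unfolding Di_def by blast
  then have "\<exists>c. c \<in> K \<and> c \<noteq> 0 \<and> (\<forall>t\<in>N. t (c * Xm x n (bb i)) = c * Xm x n (bb i))"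
    unfolding Lset_def by blast
  then show ?thesis unfolding aa_def by (rule someI_ex)
qed

lemma decomp_t: "m \<in> Lset \<Longrightarrow> (\<forall>j < n - t. m j = 0) \<Longrightarrow> \<exists>kk. \<forall>j<n. m j = (\<Sum>l<n. kk l * bb l j)"
proof (induction t arbitrary: m)
  case 0
  then show ?case by (intro exI[of _ "\<lambda>_. 0"]) simp
next
  case (Suc t)
  show ?case
  proof (cases "n - Suc t = n - t")
    case True then show ?thesis using Suc by simp
  next
    case False
    define i where "i = n - Suc t"
    have i: "i < n" and i1: "n - t = Suc i" using False unfolding i_def by auto
    have bi: "bb i \<in> Di i" "bb i i = int (dd i)" using bb_props[OF i] by auto
    have dpos: "0 < dd i" using dd_props[OF i] by blast
    define q where "q = m i div int (dd i)"
    define r where "r = m i mod int (dd i)"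
    define m' where "m' = (\<lambda>j. m j + (- q) * bb i j)"
    have m'L: "m' \<in> Lset" unfolding m'_def using L_comb Suc.prems(1) bi Di_def by blast
    have m'0: "\<forall>j<i. m' j = 0" using Suc.prems(2) bi(1) unfolding m'_def Di_def i_def by auto
    have m'i: "m' i = r" unfolding m'_def r_def q_def using bi(2)
      by (simp add: minus_div_mult_eq_mod[symmetric] mult.commute)
    have r0: "r = 0"
    proof (rule ccontr)
      assume "r \<noteq> 0"
      moreover have "0 \<le> r" "r < int (dd i)" unfolding r_def using dpos by auto
      ultimately have "0 < nat r" "m' \<in> Di i" "m' i = int (nat r)"
        using m'L m'0 m'i unfolding Di_def by auto
      then have "dd i \<le> nat r" by (rule dd_min)
      then have "int (dd i) \<le> int (nat r)" by (simp only: of_nat_le_iff)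
      moreover have "int (nat r) = r" using \<open>0 \<le> r\<close> by simp
      ultimately show False using \<open>r < int (dd i)\<close> by linarith
    qed
    have "\<forall>j < n - t. m' j = 0"
    proof (intro allI impI)
      fix j assume "j < n - t"
      then have "j < i \<or> j = i" using i1 by auto
      then show "m' j = 0" using m'0 m'i r0 by auto
    qed
    then obtain kk where kk: "\<forall>j<n. m' j = (\<Sum>l<n. kk l * bb l j)" using Suc.IH m'L by blast
    define kk' where "kk' l = kk l + (if l = i then q else 0)" for l
    have "\<forall>j<n. m j = (\<Sum>l<n. kk' l * bb l j)"
    proof (intro allI impI)
      fix j assume j: "j < n"
      have dl: "(\<Sum>l<n. (if l = i then q else 0) * bb l j) = (\<Sum>l<n. if l = i then q * bb l j else 0)"
        by (rule sum.cong) auto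
      have dl2: "(\<Sum>l<n. if l = i then q * bb l j else 0) = q * bb i j" using i by simp
      have "m j = m' j + q * bb i j" unfolding m'_def by simp
      also have "\<dots> = (\<Sum>l<n. kk l * bb l j) + (\<Sum>l<n. (if l = i then q else 0) * bb l j)"
        using kk j dl dl2 by simp
      also have "\<dots> = (\<Sum>l<n. kk' l * bb l j)"
        unfolding kk'_def by (simp add: distrib_right sum.distrib)
      finally show "m j = (\<Sum>l<n. kk' l * bb l j)" .
    qed
    then show ?thesis by blast
  qed
qed

lemma basis_exists: "\<exists>a b. qmbasis K k x n G a b"
proof -
  have "qmbasis K k x n G aa bb"
  proof (unfold_locales)
    show "\<forall>i<n. aa i \<in> K \<and> aa i \<noteq> 0" using aa_props by blast
    show "\<forall>i<n. \<forall>t\<in>N. t (aa i * Xm x n (bb i)) = aa i * Xm x n (bb i)" using aa_props by blast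
    show "\<forall>i<n. bb i i \<noteq> 0 \<and> (\<forall>j<i. bb i j = 0)"
      using bb_props dd_props unfolding Di_def by fastforce
    show "\<forall>m c. c \<in> K \<longrightarrow> c \<noteq> 0 \<longrightarrow> (\<forall>t\<in>N. t (c * Xm x n m) = c * Xm x n m) \<longrightarrow>
             (\<exists>kk. \<forall>j<n. m j = (\<Sum>l<n. kk l * bb l j))"
    proof (intro allI impI)
      fix m c assume "c \<in> K" "c \<noteq> 0" "\<forall>t\<in>N. t (c * Xm x n m) = c * Xm x n m"
      then have "m \<in> Lset" unfolding Lset_def by blast
      then show "\<exists>kk. \<forall>j<n. m j = (\<Sum>l<n. kk l * bb l j)" by (rule decomp_t[of _ n]) simp
    qed
  qed
  then show ?thesis by blast
qed

lemma purely_fix: assumes p: "purely_qm G x n" and t: "t \<in> N" and i: "i < n"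
  shows "t (x i) = x i"
proof -
  have tG: "t \<in> G" using t N_G by blast
  obtain A where A: "\<forall>j<n. t (x j) = lmon x n A j" using p tG unfolding purely_qm_def by blast
  obtain c where c: "c \<in> K" "t (x i) = c * x i" using t i unfolding N_def by blast
  have "1 * Xm x n (\<lambda>j. A j i) = c * Xm x n (\<lambda>j. if j = i then 1 else 0)"
    using A c i Xm_delta[OF xnz i] by (simp add: lmon_Xm)
  then have "\<forall>j<n. A j i = (if j = i then 1 else 0)" by (rule uniq[rotated 3]) (use c sf_1[OF Kf] in auto)
  then have "Xm x n (\<lambda>j. A j i) = Xm x n (\<lambda>j. if j = i then 1 else 0)" by (intro Xm_cong[OF xnz]) simp
  then show ?thesis using A i Xm_delta[OF xnz i] by (simp add: lmon_Xm)
qed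

lemma basis_purely: assumes p: "purely_qm G x n"
  shows "qmbasis K k x n G (\<lambda>_. 1) (\<lambda>i j. if j = i then 1 else 0)"
proof (unfold_locales)
  show "\<forall>i<n. (1::'L) \<in> K \<and> (1::'L) \<noteq> 0" using sf_1[OF Kf] by simp
  show "\<forall>i<n. \<forall>t\<in>N. t (1 * Xm x n (\<lambda>j. if j = i then 1 else 0)) = 1 * Xm x n (\<lambda>j. if j = i then 1 else 0)"
    using purely_fix[OF p] Xm_delta[OF xnz] by simp
  show "\<forall>i<n. (if i = i then 1 else 0) \<noteq> (0::int) \<and> (\<forall>j<i. (if j = i then 1 else 0) = (0::int))" by simp
  show "\<forall>m c. c \<in> K \<longrightarrow> c \<noteq> 0 \<longrightarrow> (\<forall>t\<in>N. t (c * Xm x n m) = c * Xm x n m) \<longrightarrow>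
         (\<exists>kk. \<forall>j<n. m j = (\<Sum>l<n. kk l * (if j = l then 1 else 0)))"
  proof (intro allI impI)
    fix m :: "nat \<Rightarrow> int" and c :: 'L
    have "\<forall>j<n. m j = (\<Sum>l<n. m l * (if j = l then 1 else 0))" using delta_sum by simp
    then show "\<exists>kk. \<forall>j<n. m j = (\<Sum>l<n. kk l * (if j = l then 1 else 0))" by blast
  qed
qed

end

theorem proposition1p12:
  fixes K k :: "'L::field set" and x :: "nat \<Rightarrow> 'L" and n :: nat
    and G :: "('L \<Rightarrow> 'L) set"
  assumes "finite_ext K k"
    and "alg_indep K x n"
    and "field_gen K (x ` {..<n}) = UNIV"
    and "finite G" and "aut_group G"
    and "\<forall>\<sigma>\<in>G. \<forall>a\<in>k. \<sigma> a = a"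
    and "qm_action G k K x n"
  shows "\<exists>N y. normal_subgroup N G \<and>
     \<comment> \<open>(i)\<close>
     field_gen (fixed K N) (y ` {..<n}) = fixed UNIV N \<and>
     alg_indep (fixed K N) y n \<and>
     (\<exists>a e. (\<forall>i<n. a i \<in> K \<and> a i \<noteq> 0 \<and> y i = a i * (\<Prod>j<n. x j powi e i j)) \<and>
            (purely_qm G x n \<longrightarrow> (\<forall>i<n. a i = 1))) \<and>
     \<comment> \<open>(ii): G/N acts (through G) by quasi-monomial k-automorphisms on K^N(y)\<close>
     (\<forall>\<sigma>\<in>G. \<sigma> ` fixed UNIV N \<subseteq> fixed UNIV N) \<and>
     qm_action G k (fixed K N) y n \<and>
     \<comment> \<open>(iii): rho_y : G/N \<rightarrow> GL_n(Z) is injective\<close>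
     (\<forall>\<sigma>\<in>G. \<forall>\<tau>\<in>G. \<forall>A. qm_matrix \<sigma> (fixed K N) y n A \<and> qm_matrix \<tau> (fixed K N) y n A
        \<longrightarrow> inv \<tau> \<circ> \<sigma> \<in> N)"
proof -
  have Kf: "is_subfield K" using assms(1) by (simp add: finite_ext_def)
  interpret Q: qmsetup K k x n G
    using Kf assms by unfold_locales
  have "\<exists>a b. qmbasis K k x n G a b \<and> (purely_qm G x n \<longrightarrow> (\<forall>i<n. a i = 1))"
  proof (cases "purely_qm G x n")
    case True then show ?thesis using Q.basis_purely by blast
  next
    case False then show ?thesis using Q.basis_exists by blast
  qed
  then obtain a b where B: "qmbasis K k x n G a b" and a1: "purely_qm G x n \<longrightarrow> (\<forall>i<n. a i = 1)" by blast
  interpret B: qmbasis K k x n G a b by (rule B)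
  show ?thesis
  proof (rule exI[of _ Q.N], rule exI[of _ B.y], intro conjI)
    show "normal_subgroup Q.N G" by (rule Q.N_normal)
    show "field_gen (fixed K Q.N) (B.y ` {..<n}) = fixed UNIV Q.N" by (rule B.part_i1)
    show "alg_indep (fixed K Q.N) B.y n" by (rule B.part_alg)
    show "\<exists>a e. (\<forall>i<n. a i \<in> K \<and> a i \<noteq> 0 \<and> B.y i = a i * (\<Prod>j<n. x j powi e i j)) \<and>
            (purely_qm G x n \<longrightarrow> (\<forall>i<n. a i = 1))"
      using B.aK a1 by (intro exI[of _ a] exI[of _ b]) (simp add: B.y_def Xm_def)
    show "\<forall>\<sigma>\<in>G. \<sigma> ` fixed UNIV Q.N \<subseteq> fixed UNIV Q.N" using Q.N_pres by blast
    show "qm_action G k (fixed K Q.N) B.y n" by (rule B.part_qm)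
    show "\<forall>\<sigma>\<in>G. \<forall>\<tau>\<in>G. \<forall>A. qm_matrix \<sigma> (fixed K Q.N) B.y n A \<and> qm_matrix \<tau> (fixed K Q.N) B.y n A
        \<longrightarrow> inv \<tau> \<circ> \<sigma> \<in> Q.N"
      using B.part_inj by blast
  qed
qed

end
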